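(* Let $p\in[0,1)$, $q>0$, and let $\mu$ be a Borel probability measure on $S^{n-1}$ (so $|\mu|=1$, hence $|\overline\mu_m|=1$) not concentrated in any closed hemisphere, with $\overline\mu_m$, $\Omega_m$ constructed as in the context. For each (sufficiently large) $m$ let $z^m\in\mathbb R^{\mathcal N_m}_+$ satisfy $\xi_{p,\overline\mu_m}(z^m)=o$, $I_q([z^m,\Omega_m])=1$, and $$\Phi_{p,\overline\mu_m}(z^m,o)=\inf\{\Phi_{p,\overline\mu_m}(z,\xi_{p,\overline\mu_m}(z)): z\in\mathbb R^{\mathcal N_m},\ I_q([z,\Omega_m])=1\},$$ and let $P_m=\big(\Phi_{p,\overline\mu_m}(z^m,o)/(n+q-1)\big)^{1/(n+q-p-1)}[z^m,\Omega_m]$ if $p\in(0,1)$ and $P_m=(n+q-1)^{-1/(n+q-1)}[z^m,\Omega_m]$ if $p=0$. Then there exists $c_0>0$ independent of $m$ such that $\Phi_{p,\overline\mu_m}(P_m,o)<c_0$ for all such $m$.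
   Context: Work in $\mathbb R^n$, $n\ge2$; $\omega_n$ is the volume of the unit ball. Construction: for each $m$, $U_{1,m},\dots,U_{\mathcal N_m,m}$ is a partition of $S^{n-1}$ into Borel sets of diameter $<1/m$ with nonempty relative interior, $v_{i,m}\in U_{i,m}$ in general position in dimension $n$, $\Omega_m=\{v_{1,m},\dots,v_{\mathcal N_m,m}\}$, $\mu_m=\sum_i(\mu(U_{i,m})+\mathcal N_m^{-2})\delta_{v_{i,m}}$, $\overline\mu_m=\frac{|\mu|}{|\mu_m|}\mu_m$; write $\overline\mu_m=\sum_i\alpha_{i,m}\delta_{v_{i,m}}$. For $z\in\mathbb R^{\mathcal N_m}$, $[z,\Omega_m]=\{x: x\cdot v_{i,m}\le z_i\ \forall i\}$; $\mathbb R^N_+$ is the set of vectors with positive coordinates. For $\xi\in[z,\Omega_m]$: $\Phi_{p,\overline\mu_m}(z,\xi)=\sum_i(z_i-\xi\cdot v_{i,m})^p\alpha_{i,m}$ for $p\in(0,1)$ and $\sum_i\alpha_{i,m}\log(z_i-\xi\cdot v_{i,m})$ for $p=0$; $\xi_{p,\overline\mu_m}(z)$ is the unique maximizer of $\Phi_{p,\overline\mu_m}(z,\cdot)$ on $[z,\Omega_m]$ when the latter has nonempty interior. For a convex body $K$ and $\xi\in K$, $\Phi_{p,\nu}(K,\xi)=\int_{S^{n-1}}h_{K-\xi}^p\,d\nu$ if $p\in(0,1)$ and $\int_{S^{n-1}}\log h_{K-\xi}\,d\nu$ if $p=0$, where $h_K(v)=\max_{x\in K}x\cdot v$. Chord integral: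 for compact convex $K$ and $z\in K$, $\rho_{K,z}(u)=\max\{t\ge0:z+tu\in K\}$, $\widetilde V_s(K,z)=\frac1n\int_{\{\rho_{K,z}>0\}}\rho_{K,z}^s\,du$, $I_q(K)=\frac q{\omega_n}\int_K\widetilde V_{q-1}(K,z)\,dz$. *)

theory Defs
  imports "HOL-Probability.Probability"
begin

section \<open>Polytopes [z, Omega_m]\<close>

definition polyt :: "nat \<Rightarrow> (nat \<Rightarrow> 'a::euclidean_space) \<Rightarrow> (nat \<Rightarrow> real) \<Rightarrow> 'a set" where
  "polyt N v z = {x. \<forall>i<N. x \<bullet> v i \<le> z i}"

section \<open>Discrete functional Phi_{p,mubar_m}(z, xi); value -infinity encodes log 0 for p = 0\<close>

definition Phi_disc :: "real \<Rightarrow> nat \<Rightarrow> (nat \<Rightarrow> real) \<Rightarrow> (nat \<Rightarrow> 'a::euclidean_space)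
    \<Rightarrow> (nat \<Rightarrow> real) \<Rightarrow> 'a \<Rightarrow> ereal" where
  "Phi_disc p N \<alpha> v z \<xi> =
     (if p = 0 then
        (if (\<forall>i<N. z i - \<xi> \<bullet> v i > 0)
         then ereal (\<Sum>i<N. \<alpha> i * ln (z i - \<xi> \<bullet> v i)) else -\<infinity>)
      else ereal (\<Sum>i<N. (z i - \<xi> \<bullet> v i) powr p * \<alpha> i))"

text \<open>The (unique) maximiser of Phi_disc over the polytope.\<close>
definition xi_max :: "real \<Rightarrow> nat \<Rightarrow> (nat \<Rightarrow> real) \<Rightarrow> (nat \<Rightarrow> 'a::euclidean_space)
    \<Rightarrow> (nat \<Rightarrow> real) \<Rightarrow> 'a" where
  "xi_max p N \<alpha> v z = (THE \<xi>. \<xi> \<in> polyt N v z \<and>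
      (\<forall>\<eta>\<in>polyt N v z. Phi_disc p N \<alpha> v z \<eta> \<le> Phi_disc p N \<alpha> v z \<xi>))"

section \<open>Weights of the normalised discrete measure mubar_m\<close>

definition alpha_w :: "'a measure \<Rightarrow> (nat \<Rightarrow> nat \<Rightarrow> 'a set) \<Rightarrow> (nat \<Rightarrow> nat) \<Rightarrow> nat \<Rightarrow> nat \<Rightarrow> real" where
  "alpha_w \<mu> U N m i =
     measure \<mu> (space \<mu>) / (\<Sum>j<N m. measure \<mu> (U m j) + 1 / (real (N m))\<^sup>2)
       * (measure \<mu> (U m i) + 1 / (real (N m))\<^sup>2)"

section \<open>General position: any n of the vectors are linearly independent\<close>

definition gen_pos :: "nat \<Rightarrow> (nat \<Rightarrow> 'a::euclidean_space) \<Rightarrow> bool" where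
  "gen_pos N v \<longleftrightarrow> (\<forall>I\<subseteq>{..<N}. card I \<le> DIM('a) \<longrightarrow> inj_on v I \<and> independent (v ` I))"

section \<open>Support function and Phi_{p,nu}(K, xi) for the discrete measure nu = sum alpha_i delta_{v_i}\<close>

definition supp_fun :: "'a::euclidean_space set \<Rightarrow> 'a \<Rightarrow> real" where
  "supp_fun K u = Sup ((\<lambda>x. x \<bullet> u) ` K)"

definition Phi_body :: "real \<Rightarrow> nat \<Rightarrow> (nat \<Rightarrow> real) \<Rightarrow> (nat \<Rightarrow> 'a::euclidean_space)
    \<Rightarrow> 'a set \<Rightarrow> 'a \<Rightarrow> real" where
  "Phi_body p N \<alpha> v K \<xi> =
     (if p = 0 then (\<Sum>i<N. \<alpha> i * ln (supp_fun ((\<lambda>x. x - \<xi>) ` K) (v i)))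
      else (\<Sum>i<N. (supp_fun ((\<lambda>x. x - \<xi>) ` K) (v i)) powr p * \<alpha> i))"

section \<open>Chord integrals\<close>

definition radial :: "'a::euclidean_space set \<Rightarrow> 'a \<Rightarrow> 'a \<Rightarrow> real" where
  "radial K z u = Sup {t. t \<ge> 0 \<and> z + t *\<^sub>R u \<in> K}"

text \<open>Integral over the unit sphere w.r.t. spherical Lebesgue measure, via the cone
  identity  sigma(A) = n * lambda({t u : u in A, 0 < t <= 1}).\<close>
definition sphere_int :: "('a::euclidean_space \<Rightarrow> ennreal) \<Rightarrow> ennreal" where
  "sphere_int f = ennreal (real DIM('a)) *
     (\<integral>\<^sup>+ x. f ((1 / norm x) *\<^sub>R x) * indicator (ball 0 1) x \<partial>lborel)"

definition dual_qvol :: "real \<Rightarrow> 'a::euclidean_space set \<Rightarrow> 'a \<Rightarrow> ennreal" where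
  "dual_qvol s K z = ennreal (1 / real DIM('a)) *
     sphere_int (\<lambda>u. if radial K z u > 0 then ennreal (radial K z u powr s) else 0)"

definition chord_int :: "real \<Rightarrow> 'a::euclidean_space set \<Rightarrow> ennreal" where
  "chord_int q K = ennreal (q / measure lborel (ball (0::'a) 1)) *
     (\<integral>\<^sup>+ z. dual_qvol (q - 1) K z * indicator K z \<partial>lborel)"

end

theory Submission
  imports Defs
begin

(* ---- Conc ---- *)
lemma powr_tangent:
  fixes p x :: real
  assumes p: "0 < p" "p < 1" and x: "0 \<le> x" "x \<noteq> 1"
  shows "x powr p < 1 + p * (x - 1)"
proof (cases "x = 0")
  case True then show ?thesis using p by simp
next
  case False
  then have xp: "x > 0" using x by simp
  define f where "f t = t powr p - p * t" for t :: real
  define f' where "f' t = p * t powr (p - 1) - p" for t :: real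
  have der: "DERIV f t :> f' t" if "t > 0" for t
    unfolding f_def f'_def using that
    by (auto intro!: derivative_eq_intros has_real_derivative_powr)
  show ?thesis
  proof (cases "x > 1")
    case True
    obtain z where z: "1 < z" "z < x" "f x - f 1 = (x - 1) * f' z"
      using MVT2[OF True, of f f'] der by force
    have "z powr (p - 1) < 1 powr (p - 1)"
      using z p by (intro powr_less_mono2_neg) auto
    then have "f' z < 0" using p by (simp add: f'_def)
    then have "f x - f 1 < 0" using z True by (simp add: mult_pos_neg)
    then show ?thesis by (simp add: f_def algebra_simps)
  next
    case False
    then have x1: "x < 1" using x by simp
    obtain z where z: "x < z" "z < 1" "f 1 - f x = (1 - x) * f' z"
      using MVT2[OF x1, of f f'] der xp by force
    have "1 powr (p - 1) < z powr (p - 1)"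
      using z p xp by (intro powr_less_mono2_neg) auto
    then have "f' z > 0" using p by (simp add: f'_def)
    then have "f 1 - f x > 0" using z x1 by simp
    then show ?thesis by (simp add: f_def algebra_simps)
  qed
qed

lemma powr_mid_strict:
  fixes a b p :: real
  assumes p: "0 < p" "p < 1" and ab: "0 \<le> a" "0 \<le> b" "a \<noteq> b"
  shows "(a powr p + b powr p) / 2 < ((a + b) / 2) powr p"
proof -
  define c where "c = (a + b) / 2"
  have c: "c > 0" using ab by (simp add: c_def)
  have "a / c \<noteq> 1" "b / c \<noteq> 1" using ab c by (auto simp: c_def field_simps)
  then have "(a / c) powr p < 1 + p * (a / c - 1)" "(b / c) powr p < 1 + p * (b / c - 1)"
    using ab c p by (auto intro!: powr_tangent)
  then have "(a / c) powr p + (b / c) powr p < 2 + p * ((a + b) / c - 2)"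
    by (simp add: algebra_simps add_divide_distrib)
  also have "(a + b) / c = 2" using c by (simp add: c_def field_simps)
  finally have "a powr p / c powr p + b powr p / c powr p < 2"
    using ab c by (simp add: powr_divide)
  then have "(a powr p + b powr p) / c powr p < 2" by (simp add: add_divide_distrib)
  then have "a powr p + b powr p < 2 * c powr p" using c by (simp add: divide_less_eq)
  then show ?thesis by (simp add: c_def)
qed

lemma powr_mid:
  fixes a b p :: real
  assumes p: "0 < p" "p < 1" and ab: "0 \<le> a" "0 \<le> b"
  shows "(a powr p + b powr p) / 2 \<le> ((a + b) / 2) powr p"
  using powr_mid_strict[OF p ab] by (cases "a = b") auto

lemma ln_mid:
  fixes a b :: real
  assumes ab: "0 < a" "0 < b"
  shows "(ln a + ln b) / 2 \<le> ln ((a + b) / 2)" and "a \<noteq> b \<Longrightarrow> (ln a + ln b) / 2 < ln ((a + b) / 2)"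
proof -
  have e: "(ln a + ln b) / 2 = ln (a * b) / 2" using ab by (simp add: ln_mult)
  have e2: "ln ((a + b) / 2) = ln (((a + b) / 2)^2) / 2" using ab by (simp add: ln_realpow)
  have sq: "((a + b) / 2)^2 - a * b = (a - b)^2 / 4" by (simp add: power2_eq_square field_simps)
  have "0 \<le> (a - b)^2" by simp
  then have "a * b \<le> ((a + b) / 2)^2" using sq by linarith
  then show "(ln a + ln b) / 2 \<le> ln ((a + b) / 2)" unfolding e e2 using ab by simp
  assume "a \<noteq> b"
  then have "0 < (a - b)^2" by simp
  then have "a * b < ((a + b) / 2)^2" using sq by linarith
  then show "(ln a + ln b) / 2 < ln ((a + b) / 2)" unfolding e e2 using ab by simp
qed

(* ---- A ---- *)
lemma polyt_alt: "polyt N v z = (\<Inter>i\<in>{..<N}. {x. x \<bullet> v i \<le> z i})"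
  by (auto simp: polyt_def)

lemma polyt_convex: "convex (polyt N v z)"
proof -
  have "{x. x \<bullet> v i \<le> z i} = {x. v i \<bullet> x \<le> z i}" for i by (auto simp: inner_commute)
  then show ?thesis unfolding polyt_alt by (intro convex_INT) (auto simp: convex_halfspace_le)
qed

lemma polyt_closed: "closed (polyt N v z)"
proof -
  have "{x. x \<bullet> v i \<le> z i} = {x. v i \<bullet> x \<le> z i}" for i by (auto simp: inner_commute)
  then show ?thesis unfolding polyt_alt by (intro closed_INT) (auto simp: closed_halfspace_le)
qed

lemma polyt_cball:
  assumes "\<forall>i<N. norm (v i) = 1"
  shows "cball 0 r \<subseteq> polyt N v (\<lambda>_. r)"
proof
  fix x :: "'a::euclidean_space" assume "x \<in> cball 0 r"
  then have "norm x \<le> r" by simp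
  have "x \<bullet> v i \<le> r" if "i < N" for i
    using norm_cauchy_schwarz[of x "v i"] assms that \<open>norm x \<le> r\<close> by auto
  then show "x \<in> polyt N v (\<lambda>_. r)" by (auto simp: polyt_def)
qed

lemma polyt_sub:
  assumes "\<forall>u\<in>sphere (0::'a::euclidean_space) 1. \<exists>i<N. u \<bullet> v i > 1/2" "r \<ge> 0"
  shows "polyt N v (\<lambda>_. r) \<subseteq> cball 0 (2*r)"
proof
  fix x :: 'a assume x: "x \<in> polyt N v (\<lambda>_. r)"
  show "x \<in> cball 0 (2*r)"
  proof (cases "x = 0")
    case True then show ?thesis using assms by simp
  next
    case False
    define u where "u = (1 / norm x) *\<^sub>R x"
    have "u \<in> sphere 0 1" using False by (simp add: u_def)
    then obtain i where i: "i < N" "u \<bullet> v i > 1/2" using assms by blast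
    have "x = norm x *\<^sub>R u" using False by (simp add: u_def)
    then have "x \<bullet> v i = norm x * (u \<bullet> v i)" by (metis inner_scaleR_left)
    moreover have "x \<bullet> v i \<le> r" using x i by (simp add: polyt_def)
    ultimately have "norm x * (u \<bullet> v i) \<le> r" by simp
    moreover have "norm x * (1/2) \<le> norm x * (u \<bullet> v i)" using i by (intro mult_left_mono) auto
    ultimately show ?thesis by simp
  qed
qed

lemma polyt_scale:
  assumes "r > 0"
  shows "polyt N v (\<lambda>_. r) = (\<lambda>x. r *\<^sub>R x) ` polyt N v (\<lambda>_. 1)"
proof -
  have "x \<in> polyt N v (\<lambda>_. r) \<longleftrightarrow> (1/r) *\<^sub>R x \<in> polyt N v (\<lambda>_. 1)" for x :: 'a
    using assms by (auto simp: polyt_def field_simps)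
  moreover have "x = r *\<^sub>R ((1/r) *\<^sub>R x)" for x :: 'a using assms by simp
  ultimately show ?thesis
  proof (intro set_eqI iffI)
    fix x assume "x \<in> polyt N v (\<lambda>_. r)"
    then show "x \<in> (\<lambda>x. r *\<^sub>R x) ` polyt N v (\<lambda>_. 1)"
      using \<open>\<And>x. x \<in> polyt N v (\<lambda>_. r) \<longleftrightarrow> _\<close> \<open>\<And>x. x = _\<close> by (metis image_eqI)
  next
    fix x assume "x \<in> (\<lambda>x. r *\<^sub>R x) ` polyt N v (\<lambda>_. 1)"
    then obtain y where "y \<in> polyt N v (\<lambda>_. 1)" "x = r *\<^sub>R y" by auto
    then show "x \<in> polyt N v (\<lambda>_. r)" using \<open>\<And>x. x \<in> polyt N v (\<lambda>_. r) \<longleftrightarrow> _\<close> assms by simp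
  qed
qed

(* ---- B ---- *)
lemma radial_basic:
  fixes K :: "'a::euclidean_space set"
  assumes K: "compact K" "convex K" and z: "z \<in> K" and u: "u \<noteq> 0"
  shows "0 \<le> radial K z u" "z + radial K z u *\<^sub>R u \<in> K"
    "\<And>t. 0 \<le> t \<Longrightarrow> z + t *\<^sub>R u \<in> K \<Longrightarrow> t \<le> radial K z u"
proof -
  define S where "S = {t. t \<ge> 0 \<and> z + t *\<^sub>R u \<in> K}"
  obtain B where B: "\<And>x. x \<in> K \<Longrightarrow> norm x \<le> B"
    using compact_imp_bounded[OF K(1)] bounded_iff by blast
  have "t \<le> 2 * B / norm u" if "t \<in> S" for t
  proof -
    have "t \<ge> 0" using that by (simp add: S_def)
    then have "t * norm u = norm (t *\<^sub>R u)" by simp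
    also have "\<dots> = norm ((z + t *\<^sub>R u) - z)" by simp
    also have "\<dots> \<le> norm (z + t *\<^sub>R u) + norm z" by (rule norm_triangle_ineq4)
    also have "\<dots> \<le> 2 * B" using B[OF z] B[of "z + t *\<^sub>R u"] that by (auto simp: S_def)
    finally show ?thesis using u by (simp add: field_simps)
  qed
  then have bdd: "bdd_above S" by (rule bdd_aboveI)
  have ne: "S \<noteq> {}" using z by (auto simp: S_def intro!: exI[of _ 0])
  have "closed S"
  proof -
    have "S = {t. 0 \<le> t} \<inter> (\<lambda>t. z + t *\<^sub>R u) -` K" by (auto simp: S_def)
    moreover have "closed ((\<lambda>t. z + t *\<^sub>R u) -` K)"
      by (rule continuous_closed_vimage) (auto intro!: continuous_intros compact_imp_closed K)
    moreover have "closed {t::real. 0 \<le> t}" using closed_atLeast[of 0] by (simp add: atLeast_def)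
    ultimately show ?thesis by (metis closed_Int)
  qed
  have rS: "radial K z u = Sup S" by (simp add: radial_def S_def)
  have "Sup S \<in> S" by (rule closed_contains_Sup[OF ne bdd \<open>closed S\<close>])
  then show "0 \<le> radial K z u" "z + radial K z u *\<^sub>R u \<in> K" by (auto simp: rS S_def)
  show "\<And>t. 0 \<le> t \<Longrightarrow> z + t *\<^sub>R u \<in> K \<Longrightarrow> t \<le> radial K z u"
    unfolding rS by (rule cSup_upper[OF _ bdd]) (auto simp: S_def)
qed

lemma radial_iff:
  fixes K :: "'a::euclidean_space set"
  assumes K: "compact K" "convex K" and z: "z \<in> K" and u: "u \<noteq> 0" and a: "0 \<le> a"
  shows "a \<le> radial K z u \<longleftrightarrow> z + a *\<^sub>R u \<in> K"
proof
  assume "z + a *\<^sub>R u \<in> K" then show "a \<le> radial K z u" using radial_basic[OF K z u] a by blast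
next
  assume le: "a \<le> radial K z u"
  define r where "r = radial K z u"
  have r: "0 \<le> r" "z + r *\<^sub>R u \<in> K" using radial_basic[OF K z u] by (auto simp: r_def)
  show "z + a *\<^sub>R u \<in> K"
  proof (cases "r = 0")
    case True then have "a = 0" using le a by (simp add: r_def)
    then show ?thesis using z by simp
  next
    case False
    then have rp: "r > 0" using r by simp
    have "z + a *\<^sub>R u = (1 - a/r) *\<^sub>R z + (a/r) *\<^sub>R (z + r *\<^sub>R u)"
      using rp by (simp add: algebra_simps)
    moreover have "(1 - a/r) *\<^sub>R z + (a/r) *\<^sub>R (z + r *\<^sub>R u) \<in> K"
      using K(2) z r(2) a le rp unfolding r_def[symmetric]
      by (intro convexD_alt) (auto simp: field_simps)
    ultimately show ?thesis by simp
  qed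
qed

(* ---- C ---- *)
definition rhoP :: "'a::euclidean_space set \<Rightarrow> 'a \<times> 'a \<Rightarrow> real" where
  "rhoP K w = (if fst w \<in> K \<and> snd w \<noteq> 0 then radial K (fst w) (snd w) else 0)"

lemma rhoP_nonneg: "compact K \<Longrightarrow> convex K \<Longrightarrow> 0 \<le> rhoP K w"
  using radial_basic(1)[of K "fst w" "snd w"] by (auto simp: rhoP_def)

lemma rhoP_meas:
  fixes K :: "'a::euclidean_space set"
  assumes K: "compact K" "convex K"
  shows "rhoP K \<in> borel_measurable borel"
  unfolding borel_measurable_iff_ge
proof
  fix a :: real
  show "{w \<in> space borel. a \<le> rhoP K w} \<in> sets borel"
  proof (cases "a \<le> 0")
    case True
    then have "{w \<in> space borel. a \<le> rhoP K w} = UNIV" using rhoP_nonneg[OF K] by (auto intro: order_trans)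
    then show ?thesis by simp
  next
    case False
    have eq: "{w \<in> space borel. a \<le> rhoP K w} =
      (fst -` K) \<inter> (- (snd -` {0})) \<inter> ((\<lambda>w. fst w + a *\<^sub>R snd w) -` K)"
      using False radial_iff[OF K, of _ _ a] by (auto simp: rhoP_def)
    have c1: "closed (fst -` K :: ('a \<times> 'a) set)" by (rule closed_vimage_fst) (simp add: compact_imp_closed K)
    have c2: "open (- (snd -` {0}) :: ('a \<times> 'a) set)" by (auto intro: closed_vimage_snd)
    have c3: "closed ((\<lambda>w::'a\<times>'a. fst w + a *\<^sub>R snd w) -` K)"
      by (rule continuous_closed_vimage) (auto intro!: continuous_intros compact_imp_closed K)
    show ?thesis unfolding eq using c1 c2 c3 by (intro sets.Int borel_closed borel_open)
  qed
qed

definition Fk :: "real \<Rightarrow> 'a::euclidean_space set \<Rightarrow> 'a \<Rightarrow> 'a \<Rightarrow> ennreal" where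
  "Fk s K z x = (if rhoP K (z, (1 / norm x) *\<^sub>R x) > 0 then ennreal (rhoP K (z, (1 / norm x) *\<^sub>R x) powr s) else 0)
      * indicator (ball 0 1) x"

lemma Fk_meas:
  fixes K :: "'a::euclidean_space set"
  assumes K: "compact K" "convex K"
  shows "case_prod (Fk s K) \<in> borel_measurable (lborel \<Otimes>\<^sub>M lborel)"
proof -
  have m: "rhoP K \<in> borel_measurable (borel \<Otimes>\<^sub>M borel)" using rhoP_meas[OF K] by (simp add: borel_prod)
  have m2: "(\<lambda>w::'a\<times>'a. rhoP K (fst w, (1 / norm (snd w)) *\<^sub>R snd w)) \<in> borel_measurable (lborel \<Otimes>\<^sub>M lborel)"
    by (rule measurable_compose[OF _ m]) measurable
  have [measurable]: "ball (0::'a) 1 \<in> sets borel" by simp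
  show ?thesis unfolding Fk_def case_prod_beta using m2 by measurable
qed

lemma dual_qvol_Fk:
  fixes K :: "'a::euclidean_space set"
  assumes z: "z \<in> K"
  shows "dual_qvol s K z = ennreal (1 / real DIM('a)) * (ennreal (real DIM('a)) * (\<integral>\<^sup>+x. Fk s K z x \<partial>lborel))"
proof -
  have "AE x in lborel. (if radial K z ((1 / norm x) *\<^sub>R x) > 0 then ennreal (radial K z ((1 / norm x) *\<^sub>R x) powr s) else 0)
      * indicator (ball 0 1) x = Fk s K z x"
    using AE_lborel_singleton[of 0] by eventually_elim (simp add: Fk_def rhoP_def z)
  then show ?thesis unfolding dual_qvol_def sphere_int_def by (simp add: nn_integral_cong_AE)
qed

lemma chord_integrand_meas:
  fixes K :: "'a::euclidean_space set"
  assumes K: "compact K" "convex K"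
  shows "(\<lambda>z. dual_qvol s K z * indicator K z) \<in> borel_measurable lborel"
proof -
  have eq: "(\<lambda>z. dual_qvol s K z * indicator K z) =
     (\<lambda>z. ennreal (1 / real DIM('a)) * (ennreal (real DIM('a)) * (\<integral>\<^sup>+x. Fk s K z x \<partial>lborel)) * indicator K z)"
    by (rule ext) (auto simp: dual_qvol_Fk indicator_def)
  have [measurable]: "case_prod (Fk s K) \<in> borel_measurable (lborel \<Otimes>\<^sub>M lborel)" by (rule Fk_meas[OF K])
  have [measurable]: "K \<in> sets borel" using K by (simp add: compact_imp_closed borel_closed)
  show ?thesis unfolding eq by measurable
qed

(* ---- D ---- *)
lemma mem_scale_iff:
  fixes x :: "'a::real_vector"
  assumes r: "(r::real) > 0" shows "x \<in> (\<lambda>x. r *\<^sub>R x) ` K \<longleftrightarrow> (1/r) *\<^sub>R x \<in> K"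
proof
  assume "x \<in> (\<lambda>x. r *\<^sub>R x) ` K"
  then obtain y where "y \<in> K" "x = r *\<^sub>R y" by auto
  moreover have "(1/r) *\<^sub>R (r *\<^sub>R y) = ((1/r) * r) *\<^sub>R y" by (rule scaleR_scaleR)
  moreover have "(1/r) * r = 1" using r by simp
  ultimately show "(1/r) *\<^sub>R x \<in> K" by simp
next
  assume h: "(1/r) *\<^sub>R x \<in> K"
  have "x = r *\<^sub>R ((1/r) *\<^sub>R x)" using r by simp
  then show "x \<in> (\<lambda>x. r *\<^sub>R x) ` K" using h by (rule image_eqI)
qed

lemma radial_scale:
  fixes K :: "'a::euclidean_space set"
  assumes K: "compact K" "convex K" and r: "r > 0" and z: "z \<in> K" and u: "u \<noteq> 0"
  shows "radial ((\<lambda>x. r *\<^sub>R x) ` K) (r *\<^sub>R z) u = r * radial K z u"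
proof -
  let ?K = "(\<lambda>x. r *\<^sub>R x) ` K"
  have K': "compact ?K" "convex ?K" using K by (auto intro: compact_scaling convex_scaling)
  have z': "r *\<^sub>R z \<in> ?K" using z by auto
  define a where "a = radial ?K (r *\<^sub>R z) u"
  define b where "b = radial K z u"
  have a: "0 \<le> a" "r *\<^sub>R z + a *\<^sub>R u \<in> ?K" using radial_basic[OF K' z' u] by (auto simp: a_def)
  have b: "0 \<le> b" "z + b *\<^sub>R u \<in> K" using radial_basic[OF K z u] by (auto simp: b_def)
  have "(1/r) *\<^sub>R (r *\<^sub>R z + a *\<^sub>R u) = z + (a/r) *\<^sub>R u" using r by (simp add: algebra_simps)
  then have "z + (a/r) *\<^sub>R u \<in> K" using a(2) mem_scale_iff[OF r] by metis
  then have "a / r \<le> b" using radial_basic(3)[OF K z u] a r by (auto simp: b_def)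
  moreover have "r *\<^sub>R z + (r*b) *\<^sub>R u \<in> ?K" using b(2) r
    by (subst mem_scale_iff[OF r]) (simp add: algebra_simps)
  then have "r * b \<le> a" using radial_basic(3)[OF K' z' u] b r by (auto simp: a_def)
  ultimately show ?thesis using r by (simp add: a_def[symmetric] b_def[symmetric] field_simps)
qed

lemma Fk_scale:
  fixes K :: "'a::euclidean_space set"
  assumes K: "compact K" "convex K" and r: "r > 0" and z: "z \<in> K"
  shows "Fk s ((\<lambda>x. r *\<^sub>R x) ` K) (r *\<^sub>R z) x = ennreal (r powr s) * Fk s K z x"
proof (cases "x = 0")
  case True then show ?thesis by (simp add: Fk_def rhoP_def)
next
  case False
  let ?u = "(1 / norm x) *\<^sub>R x"
  have u: "?u \<noteq> 0" using False by simp
  have z': "r *\<^sub>R z \<in> (\<lambda>x. r *\<^sub>R x) ` K" using z by auto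
  have e: "rhoP ((\<lambda>x. r *\<^sub>R x) ` K) (r *\<^sub>R z, ?u) = r * rhoP K (z, ?u)"
    using radial_scale[OF K r z u] z z' u by (simp add: rhoP_def)
  have nn: "0 \<le> rhoP K (z, ?u)" by (rule rhoP_nonneg[OF K])
  show ?thesis unfolding Fk_def e using r nn
    by (auto simp: powr_mult ennreal_mult zero_less_mult_iff indicator_def)
qed

lemma Fk_meas1:
  fixes K :: "'a::euclidean_space set"
  assumes K: "compact K" "convex K"
  shows "Fk s K z \<in> borel_measurable lborel"
proof -
  have "(\<lambda>x. case_prod (Fk s K) (z, x)) \<in> borel_measurable lborel"
    by (rule measurable_compose[OF measurable_Pair1' Fk_meas[OF K]]) simp
  then show ?thesis by simp
qed

lemma dual_qvol_scale:
  fixes K :: "'a::euclidean_space set"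
  assumes K: "compact K" "convex K" and r: "r > 0" and z: "z \<in> K"
  shows "dual_qvol s ((\<lambda>x. r *\<^sub>R x) ` K) (r *\<^sub>R z) = ennreal (r powr s) * dual_qvol s K z"
proof -
  have z': "r *\<^sub>R z \<in> (\<lambda>x. r *\<^sub>R x) ` K" using z by auto
  have "(\<integral>\<^sup>+x. Fk s ((\<lambda>x. r *\<^sub>R x) ` K) (r *\<^sub>R z) x \<partial>lborel) = (\<integral>\<^sup>+x. ennreal (r powr s) * Fk s K z x \<partial>lborel)"
    by (simp add: Fk_scale[OF K r z])
  also have "\<dots> = ennreal (r powr s) * (\<integral>\<^sup>+x. Fk s K z x \<partial>lborel)"
    by (rule nn_integral_cmult[OF Fk_meas1[OF K]])
  finally show ?thesis unfolding dual_qvol_Fk[OF z] dual_qvol_Fk[OF z'] by (simp add: ac_simps)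
qed

(* ---- E ---- *)
lemma ac4: "(a::'b::ab_semigroup_mult) * (b * (c * d)) = (b * c) * (a * d)"
  by (simp add: ac_simps)

lemma chord_int_scale:
  fixes K :: "'a::euclidean_space set"
  assumes K: "compact K" "convex K" and r: "r > 0"
  shows "chord_int q ((\<lambda>x. r *\<^sub>R x) ` K) = ennreal (r powr (real DIM('a) + q - 1)) * chord_int q K"
proof -
  let ?K = "(\<lambda>x. r *\<^sub>R x) ` K"
  have K': "compact ?K" "convex ?K" using K by (auto intro: compact_scaling convex_scaling)
  let ?G' = "\<lambda>z. dual_qvol (q - 1) ?K z * indicator ?K z"
  let ?G = "\<lambda>z. dual_qvol (q - 1) K z * indicator K z"
  have mG': "?G' \<in> borel_measurable lborel" by (rule chord_integrand_meas[OF K'])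
  have mG: "?G \<in> borel_measurable lborel" by (rule chord_integrand_meas[OF K])
  have eq: "(lborel::'a measure) = density (distr lborel borel (\<lambda>x::'a. 0 + r *\<^sub>R x)) (\<lambda>_. ennreal (\<bar>r\<bar> ^ DIM('a)))"
    using lborel_affine[of r "0::'a"] r by simp
  have "integral\<^sup>N lborel ?G' = integral\<^sup>N (density (distr lborel borel (\<lambda>x. 0 + r *\<^sub>R x)) (\<lambda>_. ennreal (\<bar>r\<bar> ^ DIM('a)))) ?G'"
    by (simp only: eq[symmetric])
  also have "\<dots> = (\<integral>\<^sup>+x. ennreal (\<bar>r\<bar> ^ DIM('a)) * ?G' x \<partial>distr lborel borel (\<lambda>x. 0 + r *\<^sub>R x))"
    by (rule nn_integral_density) (use mG' in auto)
  also have "\<dots> = (\<integral>\<^sup>+x. ennreal (\<bar>r\<bar> ^ DIM('a)) * ?G' (0 + r *\<^sub>R x) \<partial>lborel)"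
    by (rule nn_integral_distr) (use mG' in auto)
  also have "\<dots> = (\<integral>\<^sup>+x. ennreal (\<bar>r\<bar> ^ DIM('a)) * (ennreal (r powr (q - 1)) * ?G x) \<partial>lborel)"
  proof (rule nn_integral_cong)
    fix x :: 'a
    show "ennreal (\<bar>r\<bar> ^ DIM('a)) * ?G' (0 + r *\<^sub>R x) = ennreal (\<bar>r\<bar> ^ DIM('a)) * (ennreal (r powr (q - 1)) * ?G x)"
    proof (cases "x \<in> K")
      case True
      then have "r *\<^sub>R x \<in> ?K" by auto
      then show ?thesis using dual_qvol_scale[OF K r True] True by (simp add: mult.assoc)
    next
      case False
      then have "r *\<^sub>R x \<notin> ?K" using r by (auto simp: image_iff)
      then show ?thesis using False by simp
    qed
  qed
  also have "\<dots> = ennreal (\<bar>r\<bar> ^ DIM('a)) * (ennreal (r powr (q - 1)) * integral\<^sup>N lborel ?G)"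
    using mG by (simp add: nn_integral_cmult)
  finally have I: "integral\<^sup>N lborel ?G' = ennreal (\<bar>r\<bar> ^ DIM('a)) * (ennreal (r powr (q - 1)) * integral\<^sup>N lborel ?G)" .
  have pw: "r powr (real DIM('a) + q - 1) = \<bar>r\<bar> ^ DIM('a) * r powr (q - 1)"
    using r by (simp add: powr_add[symmetric] powr_realpow[symmetric] add_diff_eq[symmetric])
  have pe: "ennreal (r powr (real DIM('a) + q - 1)) = ennreal (\<bar>r\<bar> ^ DIM('a)) * ennreal (r powr (q - 1))"
    unfolding pw by (rule ennreal_mult) auto
  have "chord_int q ?K = ennreal (q / measure lborel (ball (0::'a) 1)) * integral\<^sup>N lborel ?G'"
    by (simp add: chord_int_def)
  also have "\<dots> = ennreal (q / measure lborel (ball (0::'a) 1)) * (ennreal (\<bar>r\<bar> ^ DIM('a)) * (ennreal (r powr (q - 1)) * integral\<^sup>N lborel ?G))"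
    by (simp only: I)
  also have "\<dots> = (ennreal (\<bar>r\<bar> ^ DIM('a)) * ennreal (r powr (q - 1))) * (ennreal (q / measure lborel (ball (0::'a) 1)) * integral\<^sup>N lborel ?G)"
    by (rule ac4)
  also have "\<dots> = (ennreal (\<bar>r\<bar> ^ DIM('a)) * ennreal (r powr (q - 1))) * chord_int q K"
    by (simp only: chord_int_def)
  finally show ?thesis unfolding pe .
qed

(* ---- F ---- *)
lemma dual_qvol_eq_int:
  fixes K :: "'a::euclidean_space set"
  assumes z: "z \<in> K"
  shows "dual_qvol s K z = (\<integral>\<^sup>+x. Fk s K z x \<partial>lborel)"
proof -
  have "ennreal (1 / real DIM('a)) * ennreal (real DIM('a)) = 1"
    by (simp add: ennreal_mult[symmetric])
  then show ?thesis unfolding dual_qvol_Fk[OF z] by (simp add: mult.assoc[symmetric])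
qed

lemma omega_pos: "0 < measure lborel (ball (0::'a::euclidean_space) 1)"
  using content_ball_pos[of 1 "0::'a"] by simp

lemma emeasure_ball_eq: "emeasure lborel (ball (0::'a::euclidean_space) r) = ennreal (measure lborel (ball (0::'a) r))"
  using emeasure_lborel_ball_finite[of "0::'a" r] by (simp add: emeasure_eq_ennreal_measure)

lemma powr_between:
  fixes t e :: real
  assumes "1/2 \<le> t" "t \<le> 4"
  shows "min ((1/2) powr e) (4 powr e) \<le> t powr e"
proof (cases "e \<ge> 0")
  case True
  then have "(1/2) powr e \<le> t powr e" using assms by (intro powr_mono2) auto
  then show ?thesis by simp
next
  case False
  then have "4 powr e \<le> t powr e" using assms by (intro powr_mono2') auto
  then show ?thesis by simp
qed

lemma radial_le:
  fixes K :: "'a::euclidean_space set"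
  assumes K: "compact K" "convex K" and z: "z \<in> K" and u: "norm u = 1" and sub: "K \<subseteq> cball 0 R"
  shows "radial K z u \<le> 2 * R"
proof -
  have u0: "u \<noteq> 0" using u by auto
  define t where "t = radial K z u"
  have t: "0 \<le> t" "z + t *\<^sub>R u \<in> K" using radial_basic[OF K z u0] by (auto simp: t_def)
  have "t = norm (t *\<^sub>R u)" using t u by simp
  also have "\<dots> = norm ((z + t *\<^sub>R u) - z)" by simp
  also have "\<dots> \<le> norm (z + t *\<^sub>R u) + norm z" by (rule norm_triangle_ineq4)
  also have "\<dots> \<le> 2 * R"
  proof -
    have "norm (z + t *\<^sub>R u) \<le> R" "norm z \<le> R" using sub t(2) z by (auto simp: subset_iff)
    then show ?thesis by simp
  qed
  finally show ?thesis by (simp add: t_def)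
qed

lemma chord_int_lower:
  fixes K :: "'a::euclidean_space set"
  assumes K: "compact K" "convex K" and sub1: "cball 0 1 \<subseteq> K" and sub2: "K \<subseteq> cball 0 2" and q: "q > 0"
  shows "ennreal (q * min ((1/2) powr (q-1)) (4 powr (q-1)) * measure lborel (ball (0::'a) (1/2))) \<le> chord_int q K"
proof -
  define mq where "mq = min ((1/2) powr (q-1)) (4 powr (q-1))"
  define \<omega> where "\<omega> = measure lborel (ball (0::'a) 1)"
  have \<omega>: "\<omega> > 0" using omega_pos by (simp add: \<omega>_def)
  have mq: "mq > 0" by (simp add: mq_def)
  have dq: "ennreal (mq * \<omega>) \<le> dual_qvol (q - 1) K z" if z: "z \<in> ball 0 (1/2)" for z
  proof -
    have zK: "z \<in> K" using z sub1 by auto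
    have ae: "AE x in lborel. ennreal mq * indicator (ball 0 1) x \<le> Fk (q - 1) K z x"
      using AE_lborel_singleton[of 0]
    proof eventually_elim
      case (elim x)
      let ?u = "(1 / norm x) *\<^sub>R x"
      have u: "norm ?u = 1" "?u \<noteq> 0" using elim by auto
      have "z + (1/2) *\<^sub>R ?u \<in> cball 0 1"
      proof -
        have "norm (z + (1/2) *\<^sub>R ?u) \<le> norm z + norm ((1/2) *\<^sub>R ?u)" by (rule norm_triangle_ineq)
        also have "\<dots> \<le> 1" using z u by simp
        finally show ?thesis by simp
      qed
      then have "z + (1/2) *\<^sub>R ?u \<in> K" using sub1 by auto
      then have "1/2 \<le> radial K z ?u" using radial_basic(3)[OF K zK u(2), of "1/2"] by simp
      moreover have "radial K z ?u \<le> 4" using radial_le[OF K zK u(1) sub2] by simp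
      ultimately have "mq \<le> radial K z ?u powr (q - 1)" "radial K z ?u > 0"
        using powr_between unfolding mq_def by auto
      then show ?case using elim zK by (auto simp: Fk_def rhoP_def indicator_def)
    qed
    have "(\<integral>\<^sup>+x. ennreal mq * indicator (ball (0::'a) 1) x \<partial>lborel) \<le> (\<integral>\<^sup>+x. Fk (q - 1) K z x \<partial>lborel)"
      using nn_integral_mono_AE[OF ae] by simp
    then show ?thesis using mq \<omega>
      by (simp add: dual_qvol_eq_int[OF zK] nn_integral_cmult_indicator emeasure_ball_eq \<omega>_def ennreal_mult)
  qed
  have "(\<integral>\<^sup>+z. ennreal (mq * \<omega>) * indicator (ball (0::'a) (1/2)) z \<partial>lborel) \<le> (\<integral>\<^sup>+z. dual_qvol (q - 1) K z * indicator K z \<partial>lborel)"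
  proof (rule nn_integral_mono)
    fix z :: 'a
    show "ennreal (mq * \<omega>) * indicator (ball 0 (1/2)) z \<le> dual_qvol (q - 1) K z * indicator K z"
    proof (cases "z \<in> ball 0 (1/2)")
      case True
      then have "z \<in> K" using sub1 by auto
      then show ?thesis using dq[OF True] True by (simp add: indicator_def)
    qed (simp add: indicator_def)
  qed
  then have "ennreal (mq * \<omega>) * ennreal (measure lborel (ball (0::'a) (1/2))) \<le> (\<integral>\<^sup>+z. dual_qvol (q - 1) K z * indicator K z \<partial>lborel)"
    by (simp add: nn_integral_cmult_indicator emeasure_ball_eq)
  then have "ennreal (q / \<omega>) * (ennreal (mq * \<omega>) * ennreal (measure lborel (ball (0::'a) (1/2)))) \<le> chord_int q K"
    unfolding chord_int_def \<omega>_def by (rule mult_left_mono) simp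
  moreover have "ennreal (q / \<omega>) * (ennreal (mq * \<omega>) * ennreal (measure lborel (ball (0::'a) (1/2))))
      = ennreal (q * mq * measure lborel (ball (0::'a) (1/2)))"
    using \<omega> q mq by (simp add: ennreal_mult[symmetric] field_simps)
  ultimately show ?thesis by (simp add: mq_def)
qed

(* ---- G ---- *)
lemma scale_sub:
  fixes K :: "'a::euclidean_space set"
  assumes "convex K" "0 \<in> K" "0 \<le> s" "s \<le> 1"
  shows "(\<lambda>x. s *\<^sub>R x) ` K \<subseteq> K"
proof
  fix y assume "y \<in> (\<lambda>x. s *\<^sub>R x) ` K"
  then obtain w where w: "w \<in> K" "y = s *\<^sub>R w" by auto
  have "(1 - s) *\<^sub>R 0 + s *\<^sub>R w \<in> K" using assms w by (intro convexD_alt) auto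
  then show "y \<in> K" using w by simp
qed

lemma measure_scale:
  fixes K :: "'a::euclidean_space set"
  assumes "compact K" "0 \<le> s"
  shows "measure lborel ((\<lambda>x. s *\<^sub>R x) ` K) = s ^ DIM('a) * measure lborel K"
proof -
  have "(\<lambda>x. s *\<^sub>R x) ` K = (\<lambda>x. s *\<^sub>R x + 0) ` K" by simp
  then have "measure lebesgue ((\<lambda>x. s *\<^sub>R x) ` K) = \<bar>s\<bar> ^ DIM('a) * measure lebesgue K"
    using measure_lebesgue_affine[of s 0 K] by simp
  moreover have "(\<lambda>x. s *\<^sub>R x) ` K \<in> sets borel"
    using assms by (intro borel_closed compact_imp_closed compact_scaling)
  moreover have "K \<in> sets borel" using assms by (intro borel_closed compact_imp_closed)
  ultimately show ?thesis using assms by simp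
qed

lemma dual_bound_shell:
  fixes K :: "'a::euclidean_space set"
  assumes K: "compact K" "convex K" and sub1: "cball 0 1 \<subseteq> K" and q: "q \<le> 1"
    and s: "0 \<le> s" "s < 1" and z: "z \<in> (\<lambda>x. s *\<^sub>R x) ` K"
  shows "dual_qvol (q - 1) K z \<le> ennreal ((1 - s) powr (q - 1) * measure lborel (ball (0::'a) 1))"
proof -
  obtain w where w: "w \<in> K" "z = s *\<^sub>R w" using z by auto
  have "0 \<in> K" using sub1 by auto
  moreover have "s \<le> 1" using s by simp
  ultimately have zK: "z \<in> K" using scale_sub[OF K(2) _ s(1)] z by blast
  have ae: "AE x in lborel. Fk (q - 1) K z x \<le> ennreal ((1 - s) powr (q - 1)) * indicator (ball (0::'a) 1) x"
    using AE_lborel_singleton[of 0]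
  proof eventually_elim
    case (elim x)
    let ?u = "(1 / norm x) *\<^sub>R x"
    have u: "norm ?u = 1" "?u \<noteq> 0" using elim by auto
    have "?u \<in> K" using u sub1 by auto
    then have "(1 - s) *\<^sub>R ?u + s *\<^sub>R w \<in> K" using K(2) w s by (intro convexD_alt) auto
    then have "z + (1 - s) *\<^sub>R ?u \<in> K" using w by (simp add: add.commute)
    then have le: "1 - s \<le> radial K z ?u" using radial_basic(3)[OF K zK u(2), of "1 - s"] s by simp
    then have "radial K z ?u powr (q - 1) \<le> (1 - s) powr (q - 1)"
      using s q by (intro powr_mono2') auto
    then show ?case using zK u le s by (auto simp: Fk_def rhoP_def indicator_def)
  qed
  have "(\<integral>\<^sup>+x. Fk (q - 1) K z x \<partial>lborel) \<le> (\<integral>\<^sup>+x. ennreal ((1 - s) powr (q - 1)) * indicator (ball (0::'a) 1) x \<partial>lborel)"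
    using nn_integral_mono_AE[OF ae] by simp
  then show ?thesis
    by (simp add: dual_qvol_eq_int[OF zK] nn_integral_cmult_indicator emeasure_ball_eq ennreal_mult)
qed

lemma dual_bound_ge1:
  fixes K :: "'a::euclidean_space set"
  assumes K: "compact K" "convex K" and sub2: "K \<subseteq> cball 0 2" and q: "q \<ge> 1" and zK: "z \<in> K"
  shows "dual_qvol (q - 1) K z \<le> ennreal (4 powr (q - 1) * measure lborel (ball (0::'a) 1))"
proof -
  have ae: "AE x in lborel. Fk (q - 1) K z x \<le> ennreal (4 powr (q - 1)) * indicator (ball (0::'a) 1) x"
    using AE_lborel_singleton[of 0]
  proof eventually_elim
    case (elim x)
    let ?u = "(1 / norm x) *\<^sub>R x"
    have u: "norm ?u = 1" "?u \<noteq> 0" using elim by auto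
    have "radial K z ?u \<le> 4" using radial_le[OF K zK u(1) sub2] by simp
    then have "radial K z ?u powr (q - 1) \<le> 4 powr (q - 1)"
      using q radial_basic(1)[OF K zK u(2)] by (intro powr_mono2) auto
    then show ?case using zK u by (auto simp: Fk_def rhoP_def indicator_def)
  qed
  have "(\<integral>\<^sup>+x. Fk (q - 1) K z x \<partial>lborel) \<le> (\<integral>\<^sup>+x. ennreal (4 powr (q - 1)) * indicator (ball (0::'a) 1) x \<partial>lborel)"
    using nn_integral_mono_AE[OF ae] by simp
  then show ?thesis
    by (simp add: dual_qvol_eq_int[OF zK] nn_integral_cmult_indicator emeasure_ball_eq ennreal_mult)
qed

lemma chord_int_finite_ge1:
  fixes K :: "'a::euclidean_space set"
  assumes K: "compact K" "convex K" and sub2: "K \<subseteq> cball 0 2" and q: "q \<ge> 1"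
  shows "chord_int q K < \<top>"
proof -
  define c where "c = 4 powr (q - 1) * measure lborel (ball (0::'a) 1)"
  have "(\<integral>\<^sup>+z. dual_qvol (q - 1) K z * indicator K z \<partial>lborel) \<le> (\<integral>\<^sup>+z. ennreal c * indicator (cball (0::'a) 2) z \<partial>lborel)"
  proof (rule nn_integral_mono)
    fix z :: 'a
    show "dual_qvol (q - 1) K z * indicator K z \<le> ennreal c * indicator (cball (0::'a) 2) z"
    proof (cases "z \<in> K")
      case True
      then show ?thesis using dual_bound_ge1[OF K sub2 q True] sub2 by (auto simp: c_def indicator_def)
    qed (simp add: indicator_def)
  qed
  also have "\<dots> = ennreal c * emeasure lborel (cball (0::'a) 2)" by (simp add: nn_integral_cmult_indicator)
  also have "\<dots> < \<top>" using emeasure_bounded_finite[of "cball (0::'a) 2"] by (simp add: ennreal_mult_less_top)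
  finally show ?thesis unfolding chord_int_def by (simp add: ennreal_mult_less_top)
qed

(* ---- H ---- *)
lemma chord_int_finite_lt1:
  fixes K :: "'a::euclidean_space set"
  assumes K: "compact K" "convex K" and sub1: "cball 0 1 \<subseteq> K" and sub2: "K \<subseteq> cball 0 2"
    and q: "0 < q" "q < 1"
  shows "chord_int q K < \<top>"
proof -
  define \<omega> where "\<omega> = measure lborel (ball (0::'a) 1)"
  define M where "M = measure lborel K"
  define n where "n = real DIM('a)"
  define sk where "sk k = 1 - (1/2::real)^k" for k
  define S where "S k = (\<lambda>x. sk k *\<^sub>R x) ` K" for k
  define A where "A k = S (Suc k) - S k" for k
  define B where "B = K - (\<Union>k. A k)"
  define t where "t = (1/2::real) powr (q - 1)"
  define c where "c k = t ^ Suc k * \<omega>" for k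
  have \<omega>: "\<omega> > 0" using omega_pos by (simp add: \<omega>_def)
  have t: "t > 0" by (simp add: t_def)
  have M: "M \<ge> 0" by (simp add: M_def)
  have sk: "0 \<le> sk k" "sk k < 1" "sk k \<le> 1" for k
  proof -
    have "(1/2::real)^k \<le> 1" by (simp add: power_le_one)
    moreover have "(1/2::real)^k > 0" by simp
    ultimately show "0 \<le> sk k" "sk k < 1" "sk k \<le> 1" by (auto simp: sk_def)
  qed
  have K0: "0 \<in> K" using sub1 by auto
  have SK: "S k \<subseteq> K" for k unfolding S_def by (rule scale_sub[OF K(2) K0 sk(1) sk(3)])
  have Sc: "compact (S k)" for k unfolding S_def by (rule compact_scaling[OF K(1)])
  have Kb[measurable]: "K \<in> sets borel" using K by (intro borel_closed compact_imp_closed)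
  have Sb[measurable]: "S k \<in> sets borel" for k using Sc by (intro borel_closed compact_imp_closed)
  have Ab[measurable]: "A k \<in> sets borel" for k unfolding A_def by measurable
  have Bb[measurable]: "B \<in> sets borel" unfolding B_def by measurable
  have finK: "emeasure lborel K \<noteq> \<top>"
    using emeasure_bounded_finite[of K] compact_imp_bounded[OF K(1)] by simp
  have fin_sub: "emeasure lborel X = ennreal (measure lborel X)" if "X \<subseteq> K" "X \<in> sets borel" for X
  proof -
    have "emeasure lborel X \<le> emeasure lborel K" using that by (intro emeasure_mono) auto
    then have "emeasure lborel X \<noteq> \<top>" using finK by (auto simp: top_unique)
    then show ?thesis by (rule emeasure_eq_ennreal_measure)
  qed
  have mdiff: "measure lborel (K - S k) \<le> n * (1/2)^k * M" for k
  proof -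
    have "measure lborel (K - S k) = M - measure lborel (S k)"
      unfolding M_def using finK SK by (intro measure_Diff) auto
    also have "measure lborel (S k) = sk k ^ DIM('a) * M"
      unfolding S_def M_def by (rule measure_scale[OF K(1) sk(1)])
    also have "1 - n * (1/2)^k \<le> sk k ^ DIM('a)"
    proof -
      have "1 + real DIM('a) * (-((1/2::real)^k)) \<le> (1 + -((1/2::real)^k)) ^ DIM('a)"
        by (rule Bernoulli_inequality) (simp add: power_le_one)
      then show ?thesis by (simp add: n_def sk_def)
    qed
    then have "M - sk k ^ DIM('a) * M \<le> M - (1 - n * (1/2)^k) * M"
      using M by (intro diff_left_mono mult_right_mono) auto
    finally show ?thesis by (simp add: algebra_simps)
  qed
  have emdiff: "emeasure lborel (K - S k) \<le> ennreal (n * (1/2)^k * M)" for k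
    using fin_sub[of "K - S k"] mdiff[of k] by (simp add: ennreal_leI)
  have S0: "S 0 = {0}" using K0 by (auto simp: S_def sk_def)
  have B_sub: "B \<subseteq> {0} \<union> (K - S j)" for j
  proof
    fix z assume zB: "z \<in> B"
    show "z \<in> {0} \<union> (K - S j)"
    proof (rule ccontr)
      assume "z \<notin> {0} \<union> (K - S j)"
      then have z0: "z \<noteq> 0" and zS: "z \<in> S j" using zB by (auto simp: B_def)
      define k where "k = (LEAST k. z \<in> S k)"
      have zk: "z \<in> S k" unfolding k_def using zS by (rule LeastI)
      have nk: "z \<notin> S i" if "i < k" for i using that unfolding k_def by (rule not_less_Least)
      have "k \<noteq> 0"
      proof
        assume "k = 0" then have "z \<in> S 0" using zk by simp
        then show False using z0 S0 by simp
      qed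
      then obtain k' where k': "k = Suc k'" by (cases k) auto
      then have "z \<in> A k'" using zk nk[of k'] by (auto simp: A_def)
      then show False using zB by (auto simp: B_def)
    qed
  qed
  have Bnull: "emeasure lborel B = 0"
  proof -
    have le: "emeasure lborel B \<le> ennreal (n * (1/2)^j * M)" for j
    proof -
      have "emeasure lborel B \<le> emeasure lborel ({0} \<union> (K - S j))"
        using B_sub[of j] by (intro emeasure_mono) auto
      also have "\<dots> \<le> emeasure lborel {0::'a} + emeasure lborel (K - S j)"
        by (rule emeasure_subadditive) auto
      also have "\<dots> \<le> ennreal (n * (1/2)^j * M)" using emdiff[of j] by simp
      finally show ?thesis .
    qed
    have lim: "(\<lambda>j. ennreal (n * (1/2)^j * M)) \<longlonglongrightarrow> ennreal (n * 0 * M)"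
      by (intro tendsto_ennrealI tendsto_intros) simp
    have "emeasure lborel B \<le> ennreal (n * 0 * M)"
      by (rule LIMSEQ_le_const[OF lim]) (use le in auto)
    then show ?thesis by simp
  qed
  define H where "H z = (\<Sum>k. ennreal (c k) * indicator (A k) z) + \<top> * indicator B z" for z
  have GH: "dual_qvol (q - 1) K z * indicator K z \<le> H z" for z
  proof (cases "z \<in> K")
    case False then show ?thesis by simp
  next
    case True
    show ?thesis
    proof (cases "z \<in> B")
      case True then show ?thesis by (simp add: H_def)
    next
      case False
      then obtain k where zA: "z \<in> A k" using \<open>z \<in> K\<close> by (auto simp: B_def)
      then have zS: "z \<in> (\<lambda>x. sk (Suc k) *\<^sub>R x) ` K" by (auto simp: A_def S_def)
      have "dual_qvol (q - 1) K z \<le> ennreal ((1 - sk (Suc k)) powr (q - 1) * \<omega>)"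
        unfolding \<omega>_def by (rule dual_bound_shell[OF K sub1 _ sk(1) sk(2) zS]) (use q in simp)
      also have "(1 - sk (Suc k)) powr (q - 1) = t ^ Suc k"
      proof -
        have "(1/2::real) powr real (Suc k) = (1/2)^(Suc k)" by (rule powr_realpow) simp
        then have "(1 - sk (Suc k)) = (1/2) powr real (Suc k)" by (simp add: sk_def)
        then have "(1 - sk (Suc k)) powr (q - 1) = (1/2) powr (real (Suc k) * (q - 1))"
          by (simp add: powr_powr)
        also have "\<dots> = ((1/2) powr (q - 1)) powr real (Suc k)"
          by (simp add: powr_powr mult.commute)
        also have "\<dots> = t ^ Suc k" unfolding t_def[symmetric] using t by (rule powr_realpow)
        finally show ?thesis .
      qed
      finally have "dual_qvol (q - 1) K z \<le> ennreal (c k)" by (simp add: c_def)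
      also have "ennreal (c k) = (\<Sum>i\<in>{k}. ennreal (c i) * indicator (A i) z)" using zA by simp
      also have "\<dots> \<le> (\<Sum>i. ennreal (c i) * indicator (A i) z)"
        by (rule sum_le_suminf) auto
      also have "\<dots> \<le> H z" by (simp add: H_def)
      finally show ?thesis using \<open>z \<in> K\<close> by simp
    qed
  qed
  have "(\<integral>\<^sup>+z. dual_qvol (q - 1) K z * indicator K z \<partial>lborel) \<le> integral\<^sup>N lborel H"
    by (rule nn_integral_mono) (rule GH)
  also have "integral\<^sup>N lborel H = (\<Sum>k. ennreal (c k) * emeasure lborel (A k)) + \<top> * emeasure lborel B"
    unfolding H_def
    by (simp add: nn_integral_add nn_integral_suminf nn_integral_cmult_indicator)
  also have "\<dots> = (\<Sum>k. ennreal (c k) * emeasure lborel (A k))" using Bnull by simp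
  also have "\<dots> \<le> (\<Sum>k. ennreal (c k * (n * (1/2)^k * M)))"
  proof (rule suminf_le)
    fix k
    have "emeasure lborel (A k) \<le> emeasure lborel (K - S k)"
      using SK[of "Suc k"] by (intro emeasure_mono) (auto simp: A_def)
    also have "\<dots> \<le> ennreal (n * (1/2)^k * M)" by (rule emdiff)
    finally have "ennreal (c k) * emeasure lborel (A k) \<le> ennreal (c k) * ennreal (n * (1/2)^k * M)"
      by (rule mult_left_mono) simp
    also have "\<dots> = ennreal (c k * (n * (1/2)^k * M))"
      using t \<omega> M by (simp add: ennreal_mult c_def n_def)
    finally show "ennreal (c k) * emeasure lborel (A k) \<le> ennreal (c k * (n * (1/2)^k * M))" .
  qed auto
  also have "\<dots> < \<top>"
  proof -
    have eq: "(\<lambda>k. c k * (n * (1/2)^k * M)) = (\<lambda>k. (t * \<omega> * n * M) * (t / 2) ^ k)"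
      by (rule ext) (simp add: c_def power_divide field_simps)
    have "t / 2 < 1"
    proof -
      have "t = 1 / 2 powr (q - 1)" by (simp add: t_def powr_divide)
      also have "\<dots> = 2 powr (-(q - 1))" by (rule powr_minus_divide[symmetric])
      also have "\<dots> = 2 powr (1 - q)" by simp
      finally have "t = 2 powr (1 - q)" .
      moreover have "2 powr (1 - q) < 2 powr (1::real)" using q by (intro powr_less_mono) auto
      ultimately have "t < 2 powr 1" by simp
      then show ?thesis by simp
    qed
    then have "summable (\<lambda>k. (t / 2) ^ k)" using t by (intro summable_geometric) simp
    then have "summable (\<lambda>k. c k * (n * (1/2)^k * M))" unfolding eq by (rule summable_mult)
    moreover have "\<And>k. 0 \<le> c k * (n * (1/2)^k * M)" using t \<omega> M by (simp add: c_def n_def)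
    ultimately show ?thesis using ennreal_suminf_neq_top by (auto simp: top.not_eq_extremum)
  qed
  finally show ?thesis unfolding chord_int_def by (simp add: ennreal_mult_less_top)
qed

lemma chord_int_finite:
  fixes K :: "'a::euclidean_space set"
  assumes K: "compact K" "convex K" and sub1: "cball 0 1 \<subseteq> K" and sub2: "K \<subseteq> cball 0 2"
    and q: "0 < q"
  shows "chord_int q K < \<top>"
  using chord_int_finite_lt1[OF K sub1 sub2 q] chord_int_finite_ge1[OF K sub2] by (cases "q < 1") auto

(* ---- Xi ---- *)
lemma polyt_compact:
  assumes cover: "\<forall>u\<in>sphere (0::'a::euclidean_space) 1. \<exists>i<N. u \<bullet> v i > 1/2" and r: "r \<ge> 0"
  shows "compact (polyt N v (\<lambda>_. r))"
  using polyt_sub[OF cover r] polyt_closed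
  by (metis bounded_cball bounded_subset compact_eq_bounded_closed)

lemma xi_max_polyt:
  fixes v :: "nat \<Rightarrow> 'a::euclidean_space"
  assumes \<alpha>: "\<forall>i<N. \<alpha> i > 0" and cover: "\<forall>u\<in>sphere (0::'a) 1. \<exists>i<N. u \<bullet> v i > 1/2"
    and p: "0 \<le> p" "p < 1" and r: "r > 0"
  shows "xi_max p N \<alpha> v (\<lambda>_. r) \<in> polyt N v (\<lambda>_. r)"
proof -
  let ?P = "polyt N v (\<lambda>_. r)"
  let ?F = "Phi_disc p N \<alpha> v (\<lambda>_. r)"
  define Q where "Q \<xi> \<longleftrightarrow> \<xi> \<in> ?P \<and> (\<forall>\<eta>\<in>?P. ?F \<eta> \<le> ?F \<xi>)" for \<xi>
  have P0: "0 \<in> ?P" using r by (simp add: polyt_def)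
  have Pc: "compact ?P" using polyt_compact[OF cover] r by simp
  have Pconv: "convex ?P" by (rule polyt_convex)
  have base: "0 \<le> r - \<xi> \<bullet> v i" if "\<xi> \<in> ?P" "i < N" for \<xi> i using that by (simp add: polyt_def)
  have ex: "\<exists>\<xi>. Q \<xi>"
  proof (cases "p = 0")
    case False
    then have pp: "p > 0" using p by simp
    define g where "g \<xi> = (\<Sum>i<N. (r - \<xi> \<bullet> v i) powr p * \<alpha> i)" for \<xi>
    have "continuous_on ?P g" unfolding g_def
      by (intro continuous_on_sum continuous_on_mult continuous_on_const continuous_on_powr')
         (auto intro!: continuous_intros simp: polyt_def pp)
    then obtain \<xi> where \<xi>: "\<xi> \<in> ?P" "\<forall>\<eta>\<in>?P. g \<eta> \<le> g \<xi>"
      using continuous_attains_sup[OF Pc] P0 by blast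
    have "?F \<eta> = ereal (g \<eta>)" for \<eta> using False by (simp add: Phi_disc_def g_def)
    then have "Q \<xi>" using \<xi> by (simp add: Q_def)
    then show ?thesis by blast
  next
    case True
    define g where "g \<xi> = (\<Prod>i<N. (r - \<xi> \<bullet> v i) powr \<alpha> i)" for \<xi>
    have "continuous_on ?P g" unfolding g_def
      by (intro continuous_on_prod continuous_on_powr')
         (auto intro!: continuous_intros simp: polyt_def \<alpha>)
    then obtain \<xi> where \<xi>: "\<xi> \<in> ?P" "\<forall>\<eta>\<in>?P. g \<eta> \<le> g \<xi>"
      using continuous_attains_sup[OF Pc] P0 by blast
    have "g 0 > 0" using r by (simp add: g_def prod_pos)
    then have gx: "g \<xi> > 0" using \<xi> P0 by force
    have pos: "\<forall>i<N. r - \<xi> \<bullet> v i > 0"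
    proof (intro allI impI)
      fix i assume i: "i < N"
      show "r - \<xi> \<bullet> v i > 0"
      proof (rule ccontr)
        assume "\<not> r - \<xi> \<bullet> v i > 0"
        then have "r - \<xi> \<bullet> v i = 0" using base[OF \<xi>(1) i] by simp
        then have "g \<xi> = 0" using i unfolding g_def by (intro prod_zero) auto
        then show False using gx by simp
      qed
    qed
    have lng: "ln (g \<eta>) = (\<Sum>i<N. \<alpha> i * ln (r - \<eta> \<bullet> v i))" if "\<forall>i<N. r - \<eta> \<bullet> v i > 0" for \<eta>
      unfolding g_def using that by (subst ln_prod) auto
    have Fg: "?F \<eta> = ereal (ln (g \<eta>))" if "\<forall>i<N. r - \<eta> \<bullet> v i > 0" for \<eta>
      using that True by (simp add: Phi_disc_def lng)
    have "Q \<xi>" unfolding Q_def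
    proof (intro conjI ballI)
      show "\<xi> \<in> ?P" by (rule \<xi>(1))
      fix \<eta> assume \<eta>: "\<eta> \<in> ?P"
      show "?F \<eta> \<le> ?F \<xi>"
      proof (cases "\<forall>i<N. r - \<eta> \<bullet> v i > 0")
        case True
        have "g \<eta> > 0" using True unfolding g_def by (intro prod_pos) auto
        moreover have "g \<eta> \<le> g \<xi>" using \<xi>(2) \<eta> by blast
        ultimately have "ln (g \<eta>) \<le> ln (g \<xi>)" using gx by simp
        then show ?thesis using Fg[OF True] Fg[OF pos] by simp
      next
        case False
        then show ?thesis using \<open>p = 0\<close> by (auto simp: Phi_disc_def)
      qed
    qed
    then show ?thesis by blast
  qed
  have uniq: "\<xi>1 = \<xi>2" if Q1: "Q \<xi>1" and Q2: "Q \<xi>2" for \<xi>1 \<xi>2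
  proof (rule ccontr)
    assume ne: "\<xi>1 \<noteq> \<xi>2"
    have in1: "\<xi>1 \<in> ?P" and in2: "\<xi>2 \<in> ?P" using Q1 Q2 by (auto simp: Q_def)
    have M: "?F \<xi>1 = ?F \<xi>2" using Q1 Q2 in1 in2 unfolding Q_def by (meson antisym)
    define m where "m = (1/2) *\<^sub>R \<xi>1 + (1/2) *\<^sub>R \<xi>2"
    have mP: "m \<in> ?P" unfolding m_def using Pconv in1 in2 by (intro convexD) auto
    have Fm: "?F m \<le> ?F \<xi>1" using Q1 mP by (simp add: Q_def)
    define a where "a i = r - \<xi>1 \<bullet> v i" for i
    define b where "b i = r - \<xi>2 \<bullet> v i" for i
    have mi: "r - m \<bullet> v i = (a i + b i) / 2" for i
      by (simp add: m_def a_def b_def inner_add_left field_simps)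
    obtain i0 where i0: "i0 < N" "a i0 \<noteq> b i0"
    proof -
      define d where "d = \<xi>1 - \<xi>2"
      have d: "d \<noteq> 0" using ne by (simp add: d_def)
      define u where "u = (1 / norm d) *\<^sub>R d"
      have "u \<in> sphere 0 1" using d by (simp add: u_def)
      then obtain i where i: "i < N" "u \<bullet> v i > 1/2" using cover by blast
      have "d \<bullet> v i = norm d * (u \<bullet> v i)" using d by (simp add: u_def)
      then have "d \<bullet> v i > 0" using d i by simp
      then have "a i \<noteq> b i" by (simp add: a_def b_def d_def inner_diff_left)
      then show ?thesis using i that by blast
    qed
    have a0: "0 \<le> a i" "0 \<le> b i" if "i < N" for i using base[OF in1 that] base[OF in2 that] by (auto simp: a_def b_def)
    show False
    proof (cases "p = 0")
      case False
      then have pp: "0 < p" using p by simp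
      have F1: "?F \<xi>1 = ereal (\<Sum>i<N. a i powr p * \<alpha> i)" using False by (simp add: Phi_disc_def a_def)
      have F2: "?F \<xi>2 = ereal (\<Sum>i<N. b i powr p * \<alpha> i)" using False by (simp add: Phi_disc_def b_def)
      have F3: "?F m = ereal (\<Sum>i<N. ((a i + b i) / 2) powr p * \<alpha> i)" using False by (simp add: Phi_disc_def mi)
      have eq: "(\<Sum>i<N. a i powr p * \<alpha> i) = (\<Sum>i<N. b i powr p * \<alpha> i)" using M F1 F2 by simp
      have "(\<Sum>i<N. ((a i powr p + b i powr p) / 2) * \<alpha> i) < (\<Sum>i<N. ((a i + b i) / 2) powr p * \<alpha> i)"
      proof (rule sum_strict_mono_ex1)
        show "\<forall>i\<in>{..<N}. (a i powr p + b i powr p) / 2 * \<alpha> i \<le> ((a i + b i) / 2) powr p * \<alpha> i"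
        proof
          fix i assume "i \<in> {..<N}"
          then have i: "i < N" by simp
          show "(a i powr p + b i powr p) / 2 * \<alpha> i \<le> ((a i + b i) / 2) powr p * \<alpha> i"
            using powr_mid[OF pp p(2) a0[OF i]] \<alpha> i by (intro mult_right_mono) auto
        qed
        show "\<exists>i\<in>{..<N}. (a i powr p + b i powr p) / 2 * \<alpha> i < ((a i + b i) / 2) powr p * \<alpha> i"
          using i0 \<alpha> a0[OF i0(1)] by (intro bexI[of _ i0] mult_strict_right_mono powr_mid_strict pp p) auto
      qed simp
      moreover have "(\<Sum>i<N. ((a i powr p + b i powr p) / 2) * \<alpha> i) = ((\<Sum>i<N. a i powr p * \<alpha> i) + (\<Sum>i<N. b i powr p * \<alpha> i)) / 2"
        by (simp add: sum.distrib sum_divide_distrib[symmetric] algebra_simps add_divide_distrib)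
      ultimately have "(\<Sum>i<N. a i powr p * \<alpha> i) < (\<Sum>i<N. ((a i + b i) / 2) powr p * \<alpha> i)"
        using eq by simp
      then show False using Fm F1 F3 by simp
    next
      case True
      have F0: "?F 0 = ereal (\<Sum>i<N. \<alpha> i * ln r)" using True r by (simp add: Phi_disc_def)
      have "?F 0 \<le> ?F \<xi>1" "?F 0 \<le> ?F \<xi>2" using Q1 Q2 P0 by (auto simp: Q_def)
      then have fin: "?F \<xi>1 \<noteq> -\<infinity>" "?F \<xi>2 \<noteq> -\<infinity>" using F0 by auto
      have apos: "\<forall>i<N. a i > 0" using fin(1) True by (auto simp: Phi_disc_def a_def split: if_splits)
      have bpos: "\<forall>i<N. b i > 0" using fin(2) True by (auto simp: Phi_disc_def b_def split: if_splits)
      have mpos: "\<forall>i<N. r - m \<bullet> v i > 0" using apos bpos by (auto simp: mi intro: add_pos_pos)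
      have F1: "?F \<xi>1 = ereal (\<Sum>i<N. \<alpha> i * ln (a i))" using True apos by (simp add: Phi_disc_def a_def)
      have F2: "?F \<xi>2 = ereal (\<Sum>i<N. \<alpha> i * ln (b i))" using True bpos by (simp add: Phi_disc_def b_def)
      have F3: "?F m = ereal (\<Sum>i<N. \<alpha> i * ln ((a i + b i) / 2))" using True mpos by (simp add: Phi_disc_def mi)
      have eq: "(\<Sum>i<N. \<alpha> i * ln (a i)) = (\<Sum>i<N. \<alpha> i * ln (b i))" using M F1 F2 by simp
      have "(\<Sum>i<N. \<alpha> i * ((ln (a i) + ln (b i)) / 2)) < (\<Sum>i<N. \<alpha> i * ln ((a i + b i) / 2))"
      proof (rule sum_strict_mono_ex1)
        show "\<forall>i\<in>{..<N}. \<alpha> i * ((ln (a i) + ln (b i)) / 2) \<le> \<alpha> i * ln ((a i + b i) / 2)"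
        proof
          fix i assume "i \<in> {..<N}"
          then have i: "i < N" by simp
          show "\<alpha> i * ((ln (a i) + ln (b i)) / 2) \<le> \<alpha> i * ln ((a i + b i) / 2)"
            using ln_mid(1)[of "a i" "b i"] apos bpos \<alpha> i by (intro mult_left_mono) auto
        qed
        show "\<exists>i\<in>{..<N}. \<alpha> i * ((ln (a i) + ln (b i)) / 2) < \<alpha> i * ln ((a i + b i) / 2)"
          using i0 \<alpha> apos bpos by (intro bexI[of _ i0] mult_strict_left_mono ln_mid(2)) auto
      qed simp
      moreover have "(\<Sum>i<N. \<alpha> i * ((ln (a i) + ln (b i)) / 2)) = ((\<Sum>i<N. \<alpha> i * ln (a i)) + (\<Sum>i<N. \<alpha> i * ln (b i))) / 2"
        by (simp add: sum.distrib sum_divide_distrib[symmetric] algebra_simps add_divide_distrib)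
      ultimately have "(\<Sum>i<N. \<alpha> i * ln (a i)) < (\<Sum>i<N. \<alpha> i * ln ((a i + b i) / 2))"
        using eq by simp
      then show False using Fm F1 F3 by simp
    qed
  qed
  have "\<exists>!\<xi>. Q \<xi>" using ex uniq by blast
  then have "Q (THE \<xi>. Q \<xi>)" by (rule theI')
  moreover have "xi_max p N \<alpha> v (\<lambda>_. r) = (THE \<xi>. Q \<xi>)" by (simp add: xi_max_def Q_def)
  ultimately show ?thesis by (simp add: Q_def)
qed

lemma Phi_disc_bound:
  fixes v :: "nat \<Rightarrow> 'a::euclidean_space"
  assumes \<alpha>: "\<forall>i<N. \<alpha> i \<ge> 0" and s\<alpha>: "(\<Sum>i<N. \<alpha> i) = 1" and vn: "\<forall>i<N. norm (v i) = 1"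
    and p: "0 \<le> p" and r: "r > 0" and \<xi>: "\<xi> \<in> polyt N v (\<lambda>_. r)" and \<xi>n: "norm \<xi> \<le> 2 * r"
  shows "Phi_disc p N \<alpha> v (\<lambda>_. r) \<xi> \<le> ereal (if p = 0 then ln (3 * r) else (3 * r) powr p)"
proof -
  have bd: "0 \<le> r - \<xi> \<bullet> v i" "r - \<xi> \<bullet> v i \<le> 3 * r" if "i < N" for i
  proof -
    show "0 \<le> r - \<xi> \<bullet> v i" using \<xi> that by (simp add: polyt_def)
    have "- (\<xi> \<bullet> v i) \<le> norm \<xi> * norm (v i)" using norm_cauchy_schwarz[of "-\<xi>" "v i"] by simp
    then show "r - \<xi> \<bullet> v i \<le> 3 * r" using vn that \<xi>n by simp
  qed
  show ?thesis
  proof (cases "p = 0")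
    case False
    have "(\<Sum>i<N. (r - \<xi> \<bullet> v i) powr p * \<alpha> i) \<le> (\<Sum>i<N. (3 * r) powr p * \<alpha> i)"
      using bd \<alpha> p by (intro sum_mono mult_right_mono powr_mono2) auto
    also have "\<dots> = (3 * r) powr p" by (simp add: sum_distrib_left[symmetric] s\<alpha>)
    finally show ?thesis using False by (simp add: Phi_disc_def)
  next
    case True
    show ?thesis
    proof (cases "\<forall>i<N. r - \<xi> \<bullet> v i > 0")
      case pos: True
      have "(\<Sum>i<N. \<alpha> i * ln (r - \<xi> \<bullet> v i)) \<le> (\<Sum>i<N. \<alpha> i * ln (3 * r))"
        using bd \<alpha> pos r by (intro sum_mono mult_left_mono) auto
      also have "\<dots> = ln (3 * r)" by (simp add: sum_distrib_right[symmetric] s\<alpha>)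
      finally show ?thesis using True pos by (simp add: Phi_disc_def)
    next
      case False
      then show ?thesis using True by (auto simp: Phi_disc_def)
    qed
  qed
qed

(* ---- Final ---- *)
lemma unit_close:
  fixes u w :: "'a::euclidean_space"
  assumes "norm u = 1" "norm w = 1" "dist u w < 1"
  shows "u \<bullet> w > 1/2"
proof -
  have uu: "u \<bullet> u = 1" "w \<bullet> w = 1" using assms by (simp_all add: power2_norm_eq_inner[symmetric])
  have "(norm (u - w))^2 = 2 - 2 * (u \<bullet> w)"
    using uu by (simp add: power2_norm_eq_inner inner_diff_left inner_diff_right inner_commute)
  moreover have "(norm (u - w))^2 < 1" using assms by (simp add: dist_norm power_less_one_iff abs_less_iff)
  ultimately show ?thesis by simp
qed

definition Lq :: "real \<Rightarrow> 'a::euclidean_space itself \<Rightarrow> real" where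
  "Lq q (_::'a itself) = q * min ((1/2) powr (q-1)) (4 powr (q-1)) * measure lborel (ball (0::'a) (1/2))"

lemma Lq_pos: "q > 0 \<Longrightarrow> Lq q TYPE('a::euclidean_space) > 0"
  using content_ball_pos[of "1/2" "0::'a"] by (simp add: Lq_def)

lemma test_body:
  fixes v :: "nat \<Rightarrow> 'a::euclidean_space"
  assumes vn: "\<forall>i<N. norm (v i) = 1" and cover: "\<forall>u\<in>sphere (0::'a) 1. \<exists>i<N. u \<bullet> v i > 1/2"
    and \<alpha>: "\<forall>i<N. \<alpha> i > 0" and s\<alpha>: "(\<Sum>i<N. \<alpha> i) = 1" and p: "0 \<le> p" "p < 1" and q: "q > 0"
  shows "\<exists>r>0. r \<le> Lq q TYPE('a) powr (-1 / (real DIM('a) + q - 1))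
     \<and> chord_int q (polyt N v (\<lambda>_. r)) = 1
     \<and> Phi_disc p N \<alpha> v (\<lambda>_. r) (xi_max p N \<alpha> v (\<lambda>_. r)) \<le> ereal (if p = 0 then ln (3*r) else (3*r) powr p)"
proof -
  define e where "e = real DIM('a) + q - 1"
  have "real DIM('a) \<ge> 1" using DIM_positive[where 'a='a] by linarith
  then have e: "e > 0" unfolding e_def using q by linarith
  let ?K = "polyt N v (\<lambda>_. 1::real)"
  have Kc: "compact ?K" by (rule polyt_compact[OF cover]) simp
  have Kv: "convex ?K" by (rule polyt_convex)
  have s1: "cball 0 1 \<subseteq> ?K" by (rule polyt_cball[OF vn])
  have s2: "?K \<subseteq> cball 0 2" using polyt_sub[OF cover, of 1] by simp
  define L where "L = Lq q TYPE('a)"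
  have L: "L > 0" using Lq_pos[OF q] by (simp add: L_def)
  have lo: "ennreal L \<le> chord_int q ?K" using chord_int_lower[OF Kc Kv s1 s2 q] by (simp add: L_def Lq_def)
  have up: "chord_int q ?K < \<top>" by (rule chord_int_finite[OF Kc Kv s1 s2 q])
  define C where "C = enn2real (chord_int q ?K)"
  have CK: "chord_int q ?K = ennreal C" using up by (simp add: C_def ennreal_enn2real_if)
  have C0: "C \<ge> 0" by (simp add: C_def)
  have LC: "L \<le> C" using lo L C0 by (simp add: CK)
  have C: "C > 0" using L LC by simp
  define r where "r = C powr (-1 / e)"
  have r: "r > 0" using C by (simp add: r_def)
  have rR: "r \<le> L powr (-1 / e)" unfolding r_def using e L LC by (intro powr_mono2') auto
  have re: "r powr e * C = 1"
  proof -
    have "r powr e = C powr (-1)" using e C by (simp add: r_def powr_powr)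
    then show ?thesis using C by (simp add: powr_minus_divide)
  qed
  have ci: "chord_int q (polyt N v (\<lambda>_. r)) = 1"
  proof -
    have "chord_int q (polyt N v (\<lambda>_. r)) = ennreal (r powr e) * chord_int q ?K"
      unfolding polyt_scale[OF r] e_def by (rule chord_int_scale[OF Kc Kv r])
    also have "\<dots> = ennreal (r powr e * C)" using C by (simp add: CK ennreal_mult)
    finally show ?thesis using re by simp
  qed
  have xiP: "xi_max p N \<alpha> v (\<lambda>_. r) \<in> polyt N v (\<lambda>_. r)" by (rule xi_max_polyt[OF \<alpha> cover p r])
  have xin: "norm (xi_max p N \<alpha> v (\<lambda>_. r)) \<le> 2 * r"
    using polyt_sub[OF cover, of r] r xiP by auto
  have "Phi_disc p N \<alpha> v (\<lambda>_. r) (xi_max p N \<alpha> v (\<lambda>_. r)) \<le> ereal (if p = 0 then ln (3*r) else (3*r) powr p)"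
    using \<alpha> by (intro Phi_disc_bound[OF _ s\<alpha> vn p(1) r xiP xin]) (auto simp: less_imp_le)
  then show ?thesis using r rR ci by (auto simp: e_def L_def)
qed

lemma supp_bounds:
  fixes v :: "nat \<Rightarrow> 'a::euclidean_space"
  assumes vn: "\<forall>i<N. norm (v i) = 1" and z: "\<forall>j<N. z j > 0" and c: "c \<ge> 0" and i: "i < N"
  defines "h \<equiv> supp_fun ((\<lambda>x. x - 0) ` ((\<lambda>x. c *\<^sub>R x) ` polyt N v z)) (v i)"
  shows "0 \<le> h" "h \<le> c * z i" "c > 0 \<Longrightarrow> 0 < h"
proof -
  define S where "S = (\<lambda>x. x \<bullet> v i) ` ((\<lambda>x. x - 0) ` ((\<lambda>x. c *\<^sub>R x) ` polyt N v z))"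
  have hS: "h = Sup S" by (simp add: h_def supp_fun_def S_def)
  have S: "S = (\<lambda>x. c * (x \<bullet> v i)) ` polyt N v z" by (auto simp: S_def image_image)
  have ub: "y \<le> c * z i" if "y \<in> S" for y
    using that i c by (auto simp: S polyt_def intro: mult_left_mono)
  then have bdd: "bdd_above S" by (rule bdd_aboveI)
  have "0 \<in> polyt N v z" using z by (auto simp: polyt_def less_imp_le)
  then have S0: "0 \<in> S" unfolding S by (rule image_eqI[rotated]) simp
  then show "0 \<le> h" unfolding hS by (rule cSup_upper[OF _ bdd])
  show "h \<le> c * z i" unfolding hS using S0 ub by (intro cSup_least) auto
  assume cp: "c > 0"
  define t where "t = Min (z ` {..<N})"
  have t: "t > 0" unfolding t_def using z i by (subst Min_gr_iff) auto
  have "t *\<^sub>R v i \<in> polyt N v z"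
  proof -
    have "(t *\<^sub>R v i) \<bullet> v j \<le> z j" if j: "j < N" for j
    proof -
      have "(t *\<^sub>R v i) \<bullet> v j \<le> norm (t *\<^sub>R v i) * norm (v j)" by (rule norm_cauchy_schwarz)
      also have "\<dots> = t" using vn i j t by simp
      also have "t \<le> z j" using j by (simp add: t_def)
      finally show ?thesis .
    qed
    then show ?thesis by (simp add: polyt_def)
  qed
  moreover have "(t *\<^sub>R v i) \<bullet> v i = t"
  proof -
    have "v i \<bullet> v i = 1" using vn i by (simp add: power2_norm_eq_inner[symmetric])
    then show ?thesis by simp
  qed
  ultimately have "c * t \<in> S" unfolding S by (metis (no_types, lifting) image_eqI)
  then have "c * t \<le> h" unfolding hS by (rule cSup_upper[OF _ bdd])
  then show "0 < h" using cp t by (smt (verit) mult_pos_pos)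
qed

(* ---- Main2 ---- *)
theorem lemma5p3:
  fixes \<mu> :: "'a::euclidean_space measure"
    and p q :: real
    and N :: "nat \<Rightarrow> nat"
    and U :: "nat \<Rightarrow> nat \<Rightarrow> 'a set"
    and v :: "nat \<Rightarrow> nat \<Rightarrow> 'a"
    and zs :: "nat \<Rightarrow> nat \<Rightarrow> real"
    and m0 :: nat
  assumes dim: "DIM('a) \<ge> 2"
    and p: "0 \<le> p" "p < 1"
    and q: "q > 0"
    and prob: "prob_space \<mu>"
    and borel: "sets \<mu> = sets (borel :: 'a measure)"
    and on_sphere: "emeasure \<mu> (UNIV - sphere 0 1) = 0"
    and not_hemi: "\<forall>u\<in>sphere (0::'a) 1. emeasure \<mu> {x \<in> sphere 0 1. x \<bullet> u < 0} > 0"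
    and part_sets: "\<forall>m\<ge>1. \<forall>i<N m. U m i \<in> sets borel \<and> U m i \<subseteq> sphere 0 1
                       \<and> diameter (U m i) < 1 / real m
                       \<and> (\<exists>T. openin (top_of_set (sphere 0 1)) T \<and> T \<noteq> {} \<and> T \<subseteq> U m i)"
    and part_disj: "\<forall>m\<ge>1. \<forall>i<N m. \<forall>j<N m. i \<noteq> j \<longrightarrow> U m i \<inter> U m j = {}"
    and part_cover: "\<forall>m\<ge>1. (\<Union>i<N m. U m i) = sphere 0 1"
    and v_in: "\<forall>m\<ge>1. \<forall>i<N m. v m i \<in> U m i"
    and v_gen: "\<forall>m\<ge>1. gen_pos (N m) (v m)"
    and m0: "m0 \<ge> 1"
    and z_pos: "\<forall>m\<ge>m0. \<forall>i<N m. zs m i > 0"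
    and z_xi: "\<forall>m\<ge>m0. xi_max p (N m) (alpha_w \<mu> U N m) (v m) (zs m) = 0"
    and z_Iq: "\<forall>m\<ge>m0. chord_int q (polyt (N m) (v m) (zs m)) = 1"
    and z_min: "\<forall>m\<ge>m0. Phi_disc p (N m) (alpha_w \<mu> U N m) (v m) (zs m) 0 =
                 Inf {Phi_disc p (N m) (alpha_w \<mu> U N m) (v m) z
                        (xi_max p (N m) (alpha_w \<mu> U N m) (v m) z)
                      | z. chord_int q (polyt (N m) (v m) z) = 1}"
  shows "\<exists>c0>0. \<forall>m\<ge>m0.
           Phi_body p (N m) (alpha_w \<mu> U N m) (v m)
             ((\<lambda>x. (if p = 0 then (real DIM('a) + q - 1) powr (-1 / (real DIM('a) + q - 1))
               else (real_of_ereal (Phi_disc p (N m) (alpha_w \<mu> U N m) (v m) (zs m) 0)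
                       / (real DIM('a) + q - 1)) powr (1 / (real DIM('a) + q - p - 1)))
               *\<^sub>R x) ` polyt (N m) (v m) (zs m)) 0 < c0"
proof -
  define n where "n = real DIM('a)"
  define e where "e = n + q - 1"
  have n1: "n \<ge> 1" using DIM_positive[where 'a='a] by (simp add: n_def)
  have e: "e > 0" unfolding e_def using n1 q by linarith
  have n2: "n \<ge> 2" using dim by (simp add: n_def)
  have ep: "e - p > 0" unfolding e_def using n2 q p by linarith
  define \<alpha> where "\<alpha> m = alpha_w \<mu> U N m" for m
  have one: "measure \<mu> (space \<mu>) = 1" using prob by (rule prob_space.prob_space)
  have sph: "sphere (0::'a) 1 \<noteq> {}" by simp
  have Npos: "N m > 0" if m: "m \<ge> 1" for m
  proof (rule ccontr)
    assume "\<not> N m > 0"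
    then have "N m = 0" by simp
    then have "(\<Union>i<N m. U m i) = {}" by simp
    then show False using part_cover m sph by simp
  qed
  have vn: "\<forall>i<N m. norm (v m i) = 1" if m: "m \<ge> 1" for m
    using v_in part_sets m by (auto simp: subset_iff)
  have cover: "\<forall>u\<in>sphere (0::'a) 1. \<exists>i<N m. u \<bullet> v m i > 1/2" if m: "m \<ge> 1" for m
  proof
    fix u :: 'a assume u: "u \<in> sphere 0 1"
    then obtain i where i: "i < N m" "u \<in> U m i" using part_cover m by blast
    have sub: "U m i \<subseteq> sphere 0 1" and dia: "diameter (U m i) < 1 / real m"
      using part_sets m i by auto
    have vi: "v m i \<in> U m i" using v_in m i by auto
    have "dist u (v m i) \<le> diameter (U m i)"
      by (rule diameter_bounded_bound[OF bounded_subset[OF bounded_sphere sub] i(2) vi])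
    also have "\<dots> < 1 / real m" by (rule dia)
    also have "\<dots> \<le> 1" using m by simp
    finally have "dist u (v m i) < 1" .
    then have "u \<bullet> v m i > 1/2" using u vn[OF m] i by (intro unit_close) auto
    then show "\<exists>i<N m. u \<bullet> v m i > 1/2" using i by blast
  qed
  have apos: "\<forall>i<N m. \<alpha> m i > 0" and asum: "(\<Sum>i<N m. \<alpha> m i) = 1" if m: "m \<ge> 1" for m
  proof -
    define S where "S = (\<Sum>j<N m. measure \<mu> (U m j) + 1 / (real (N m))\<^sup>2)"
    have Sp: "S > 0" unfolding S_def using Npos[OF m]
      by (intro sum_pos) (auto intro: add_nonneg_pos)
    have ae: "\<alpha> m i = (measure \<mu> (U m i) + 1 / (real (N m))\<^sup>2) / S" for i
      by (simp add: \<alpha>_def alpha_w_def one S_def)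
    show "\<forall>i<N m. \<alpha> m i > 0" unfolding ae using Sp Npos[OF m] by (auto intro!: divide_pos_pos add_nonneg_pos)
    show "(\<Sum>i<N m. \<alpha> m i) = 1" unfolding ae using Sp by (simp add: sum_divide_distrib[symmetric] S_def)
  qed
  define R where "R = Lq q TYPE('a) powr (-1 / (real DIM('a) + q - 1))"
  have R: "R > 0" using Lq_pos[OF q, where 'a='a] by (simp add: R_def)
  have zbound: "Phi_disc p (N m) (\<alpha> m) (v m) (zs m) 0 \<le> ereal (if p = 0 then ln (3 * R) else (3 * R) powr p)"
    if m: "m \<ge> m0" for m
  proof -
    have m1: "m \<ge> 1" using m m0 by simp
    obtain r where r: "r > 0" "r \<le> R" "chord_int q (polyt (N m) (v m) (\<lambda>_. r)) = 1"
      "Phi_disc p (N m) (\<alpha> m) (v m) (\<lambda>_. r) (xi_max p (N m) (\<alpha> m) (v m) (\<lambda>_. r))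
         \<le> ereal (if p = 0 then ln (3*r) else (3*r) powr p)"
      using test_body[OF vn[OF m1] cover[OF m1] apos[OF m1] asum[OF m1] p q] unfolding R_def by blast
    have "Phi_disc p (N m) (\<alpha> m) (v m) (zs m) 0 \<le> Phi_disc p (N m) (\<alpha> m) (v m) (\<lambda>_. r) (xi_max p (N m) (\<alpha> m) (v m) (\<lambda>_. r))"
      unfolding z_min[rule_format, OF m, folded \<alpha>_def] using r(3) by (intro Inf_lower) blast
    also have "\<dots> \<le> ereal (if p = 0 then ln (3*r) else (3*r) powr p)" by (rule r(4))
    also have "\<dots> \<le> ereal (if p = 0 then ln (3 * R) else (3 * R) powr p)"
      using r p by (auto intro: powr_mono2)
    finally show ?thesis .
  qed
  show ?thesis
  proof (cases "p = 0")
    case True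
    define c where "c = e powr (-1 / e)"
    have c: "c > 0" using e by (simp add: c_def)
    define c0 where "c0 = \<bar>ln c + ln (3 * R)\<bar> + 1"
    show ?thesis
    proof (intro exI[of _ c0] conjI allI impI)
      show "c0 > 0" by (simp add: c0_def)
      fix m assume m: "m \<ge> m0"
      have m1: "m \<ge> 1" using m m0 by simp
      have zp: "\<forall>i<N m. zs m i > 0" using z_pos m by simp
      have scale: "(if p = 0 then (real DIM('a) + q - 1) powr (-1 / (real DIM('a) + q - 1))
               else (real_of_ereal (Phi_disc p (N m) (alpha_w \<mu> U N m) (v m) (zs m) 0)
                       / (real DIM('a) + q - 1)) powr (1 / (real DIM('a) + q - p - 1))) = c"
        using True by (simp add: c_def e_def n_def)
      let ?h = "\<lambda>i. supp_fun ((\<lambda>x. x - 0) ` ((\<lambda>x. c *\<^sub>R x) ` polyt (N m) (v m) (zs m))) (v m i)"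
      have "(\<Sum>i<N m. \<alpha> m i * ln (?h i)) \<le> (\<Sum>i<N m. \<alpha> m i * ln (c * zs m i))"
      proof (rule sum_mono)
        fix i assume "i \<in> {..<N m}"
        then have i: "i < N m" by simp
        have "0 < ?h i" "?h i \<le> c * zs m i" using supp_bounds[OF vn[OF m1] zp _ i, of c] c by auto
        then show "\<alpha> m i * ln (?h i) \<le> \<alpha> m i * ln (c * zs m i)"
          using apos[OF m1] i by (intro mult_left_mono) auto
      qed
      also have "\<dots> = ln c + (\<Sum>i<N m. \<alpha> m i * ln (zs m i))"
      proof -
        have "(\<Sum>i<N m. \<alpha> m i * ln (c * zs m i)) = (\<Sum>i<N m. \<alpha> m i * ln c + \<alpha> m i * ln (zs m i))"
          using c zp by (intro sum.cong) (auto simp: ln_mult distrib_left)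
        also have "\<dots> = ln c * (\<Sum>i<N m. \<alpha> m i) + (\<Sum>i<N m. \<alpha> m i * ln (zs m i))"
          by (simp add: sum.distrib sum_distrib_left mult.commute)
        finally show ?thesis using asum[OF m1] by simp
      qed
      also have "(\<Sum>i<N m. \<alpha> m i * ln (zs m i)) \<le> ln (3 * R)"
      proof -
        have "Phi_disc p (N m) (\<alpha> m) (v m) (zs m) 0 = ereal (\<Sum>i<N m. \<alpha> m i * ln (zs m i))"
          using True zp by (simp add: Phi_disc_def)
        then show ?thesis using zbound[OF m] True by simp
      qed
      finally have "(\<Sum>i<N m. \<alpha> m i * ln (?h i)) < c0" unfolding c0_def by linarith
      then show "Phi_body p (N m) (alpha_w \<mu> U N m) (v m)
             ((\<lambda>x. (if p = 0 then (real DIM('a) + q - 1) powr (-1 / (real DIM('a) + q - 1))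
               else (real_of_ereal (Phi_disc p (N m) (alpha_w \<mu> U N m) (v m) (zs m) 0)
                       / (real DIM('a) + q - 1)) powr (1 / (real DIM('a) + q - p - 1)))
               *\<^sub>R x) ` polyt (N m) (v m) (zs m)) 0 < c0"
        unfolding scale using True by (simp add: Phi_body_def \<alpha>_def)
    qed
  next
    case False
    then have pp: "p > 0" using p by simp
    define B where "B = (3 * R) powr p"
    have B: "B \<ge> 0" by (simp add: B_def)
    define c0 where "c0 = (B / e) powr (p / (e - p)) * B + 1"
    show ?thesis
    proof (intro exI[of _ c0] conjI allI impI)
      show "c0 > 0" unfolding c0_def using B e by (simp add: add_nonneg_pos)
      fix m assume m: "m \<ge> m0"
      have m1: "m \<ge> 1" using m m0 by simp
      have zp: "\<forall>i<N m. zs m i > 0" using z_pos m by simp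
      define E where "E = (\<Sum>i<N m. zs m i powr p * \<alpha> m i)"
      have PE: "Phi_disc p (N m) (\<alpha> m) (v m) (zs m) 0 = ereal E" using False by (simp add: Phi_disc_def E_def)
      have E0: "E \<ge> 0" unfolding E_def using apos[OF m1] by (intro sum_nonneg) (auto intro: less_imp_le)
      have EB: "E \<le> B" using zbound[OF m] False PE by (simp add: B_def)
      define c where "c = (E / e) powr (1 / (e - p))"
      have c: "c \<ge> 0" by (simp add: c_def)
      have scale: "(if p = 0 then (real DIM('a) + q - 1) powr (-1 / (real DIM('a) + q - 1))
               else (real_of_ereal (Phi_disc p (N m) (alpha_w \<mu> U N m) (v m) (zs m) 0)
                       / (real DIM('a) + q - 1)) powr (1 / (real DIM('a) + q - p - 1))) = c"
      proof -
        have eq: "real DIM('a) + q - p - 1 = real DIM('a) + q - 1 - p" by simp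
        show ?thesis using False PE by (simp only: eq) (simp add: c_def e_def n_def \<alpha>_def)
      qed
      let ?h = "\<lambda>i. supp_fun ((\<lambda>x. x - 0) ` ((\<lambda>x. c *\<^sub>R x) ` polyt (N m) (v m) (zs m))) (v m i)"
      have "(\<Sum>i<N m. ?h i powr p * \<alpha> m i) \<le> (\<Sum>i<N m. (c * zs m i) powr p * \<alpha> m i)"
      proof (rule sum_mono)
        fix i assume "i \<in> {..<N m}"
        then have i: "i < N m" by simp
        have "0 \<le> ?h i" "?h i \<le> c * zs m i" using supp_bounds[OF vn[OF m1] zp c i] by auto
        then show "?h i powr p * \<alpha> m i \<le> (c * zs m i) powr p * \<alpha> m i"
          using apos[OF m1] i pp by (intro mult_right_mono powr_mono2) auto
      qed
      also have "\<dots> = c powr p * E"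
        unfolding E_def sum_distrib_left using c zp
        by (intro sum.cong) (auto simp: powr_mult mult.assoc)
      also have "c powr p = (E / e) powr (p / (e - p))"
        unfolding c_def by (simp add: powr_powr)
      also have "(E / e) powr (p / (e - p)) * E \<le> (B / e) powr (p / (e - p)) * B"
      proof (rule mult_mono)
        show "(E / e) powr (p / (e - p)) \<le> (B / e) powr (p / (e - p))"
          using E0 EB e ep pp by (intro powr_mono2 divide_right_mono) auto
      qed (use E0 EB in auto)
      finally have "(\<Sum>i<N m. ?h i powr p * \<alpha> m i) < c0" unfolding c0_def by linarith
      then show "Phi_body p (N m) (alpha_w \<mu> U N m) (v m)
             ((\<lambda>x. (if p = 0 then (real DIM('a) + q - 1) powr (-1 / (real DIM('a) + q - 1))
               else (real_of_ereal (Phi_disc p (N m) (alpha_w \<mu> U N m) (v m) (zs m) 0)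
                       / (real DIM('a) + q - 1)) powr (1 / (real DIM('a) + q - p - 1)))
               *\<^sub>R x) ` polyt (N m) (v m) (zs m)) 0 < c0"
        unfolding scale using False by (simp add: Phi_body_def \<alpha>_def)
    qed
  qed
qed

end
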